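(* Let $(X,b,m)$ be a connected weighted graph satisfying conditions (B) and (M), let $D\subset X$ be relatively dense and $\Omega:=X\setminus D\ne\emptyset$. Let $I\subset\mathbb{R}$ be a Borel set having a maximum with $\max I<\frac{1}{\mathrm{Inr}(\Omega)\cdot\mathrm{vol}[\mathrm{Inr}(\Omega)]}$. Then $$P_I(H)\,1_D\,P_I(H)\ge\frac{\left(\frac{1}{\mathrm{Inr}(\Omega)\cdot\mathrm{vol}[\mathrm{Inr}(\Omega)]}-\max I\right)^2}{16\,\|H+1\|^4}\,P_I(H).$$
   Context: A weighted graph $(X,b,m)$: $X$ countable, $b:X\times X\to[0,\infty)$ symmetric with $b(x,x)=0$ and $\sum_y b(x,y)<\infty$, $m:X\to(0,\infty)$; $\mathrm{vol}(A):=\sum_{x\in A}m(x)$. Condition (B): $\sup_x\frac{1}{m(x)}\sum_y b(x,y)<\infty$. Condition (M): $\sup_x m(x)<\infty$. On $\ell^2(X,m)$, $H$ is the bounded selfadjoint operator $(Hf)(x)=\frac{1}{m(x)}\sum_y b(x,y)(f(x)-f(y))$; $P_I(H)$ is its spectral projection onto $I$, and $1_D$ is multiplication by the indicator of $D$. A path is $\gamma=(x_0,\dots,x_k)$ with $b(x_j,x_{j+1})>0$, of length $\sum_{j=0}^{k-1}1/b(x_j,x_{j+1})$; connected means any two points are joined by a path; $d(x,y)$ is the infimum of path lengths; $U_r(x):=\{y:d(x,y)<r\}$, $B_r(x):=\{y:d(x,y)\le r\}$. $D$ is relatively dense if $\inf\{R>0:\bigcup_{p\in D}B_R(p)=X\}<\infty$.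 $\mathrm{Inr}(\Omega):=\sup\{r>0:\exists x\in\Omega\text{ with }U_r(x)\subset\Omega\}$ and $\mathrm{vol}[s]:=\sup_{x\in X}\mathrm{vol}(B_s(x))$. *)

theory Defs
  imports "HOL-Analysis.Analysis"
begin

text \<open>The vertex set X is the whole (countable) type 'a; b is the edge weight,
  m the vertex measure.\<close>

definition weighted_graph :: "('a \<Rightarrow> 'a \<Rightarrow> real) \<Rightarrow> ('a \<Rightarrow> real) \<Rightarrow> bool" where
  "weighted_graph b m \<longleftrightarrow>
     (\<forall>x y. b x y = b y x) \<and> (\<forall>x. b x x = 0) \<and> (\<forall>x y. 0 \<le> b x y) \<and>
     (\<forall>x. (\<lambda>y. b x y) summable_on UNIV) \<and> (\<forall>x. 0 < m x)"

definition vol :: "('a \<Rightarrow> real) \<Rightarrow> 'a set \<Rightarrow> real" where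
  "vol m A = (\<Sum>\<^sub>\<infinity>x\<in>A. m x)"

definition condB :: "('a \<Rightarrow> 'a \<Rightarrow> real) \<Rightarrow> ('a \<Rightarrow> real) \<Rightarrow> bool" where
  "condB b m \<longleftrightarrow> (\<exists>C. \<forall>x. (\<Sum>\<^sub>\<infinity>y. b x y) / m x \<le> C)"

definition condM :: "('a \<Rightarrow> real) \<Rightarrow> bool" where
  "condM m \<longleftrightarrow> (\<exists>C. \<forall>x. m x \<le> C)"

definition is_path :: "('a \<Rightarrow> 'a \<Rightarrow> real) \<Rightarrow> 'a list \<Rightarrow> bool" where
  "is_path b p \<longleftrightarrow> p \<noteq> [] \<and> (\<forall>j. Suc j < length p \<longrightarrow> 0 < b (p ! j) (p ! Suc j))"

definition path_length :: "('a \<Rightarrow> 'a \<Rightarrow> real) \<Rightarrow> 'a list \<Rightarrow> real" where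
  "path_length b p = (\<Sum>j<length p - 1. 1 / b (p ! j) (p ! Suc j))"

definition graph_connected :: "('a \<Rightarrow> 'a \<Rightarrow> real) \<Rightarrow> bool" where
  "graph_connected b \<longleftrightarrow> (\<forall>x y. \<exists>p. is_path b p \<and> hd p = x \<and> last p = y)"

definition gdist :: "('a \<Rightarrow> 'a \<Rightarrow> real) \<Rightarrow> 'a \<Rightarrow> 'a \<Rightarrow> real" where
  "gdist b x y = Inf {path_length b p | p. is_path b p \<and> hd p = x \<and> last p = y}"

definition open_ball :: "('a \<Rightarrow> 'a \<Rightarrow> real) \<Rightarrow> real \<Rightarrow> 'a \<Rightarrow> 'a set" where
  "open_ball b r x = {y. gdist b x y < r}"

definition closed_ball :: "('a \<Rightarrow> 'a \<Rightarrow> real) \<Rightarrow> real \<Rightarrow> 'a \<Rightarrow> 'a set" where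
  "closed_ball b r x = {y. gdist b x y \<le> r}"

definition relatively_dense :: "('a \<Rightarrow> 'a \<Rightarrow> real) \<Rightarrow> 'a set \<Rightarrow> bool" where
  "relatively_dense b D \<longleftrightarrow> (\<exists>R>0. (\<Union>p\<in>D. closed_ball b R p) = UNIV)"

definition inradius :: "('a \<Rightarrow> 'a \<Rightarrow> real) \<Rightarrow> 'a set \<Rightarrow> real" where
  "inradius b \<Omega> = Sup {r. r > 0 \<and> (\<exists>x\<in>\<Omega>. open_ball b r x \<subseteq> \<Omega>)}"

definition vol_sup :: "('a \<Rightarrow> 'a \<Rightarrow> real) \<Rightarrow> ('a \<Rightarrow> real) \<Rightarrow> real \<Rightarrow> real" where
  "vol_sup b m s = (SUP x. vol m (closed_ball b s x))"

definition in_l2 :: "('a \<Rightarrow> real) \<Rightarrow> ('a \<Rightarrow> real) \<Rightarrow> bool" where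
  "in_l2 m f \<longleftrightarrow> (\<lambda>x. m x * (f x)\<^sup>2) summable_on UNIV"

definition l2_inner :: "('a \<Rightarrow> real) \<Rightarrow> ('a \<Rightarrow> real) \<Rightarrow> ('a \<Rightarrow> real) \<Rightarrow> real" where
  "l2_inner m f g = (\<Sum>\<^sub>\<infinity>x. m x * f x * g x)"

definition l2_norm :: "('a \<Rightarrow> real) \<Rightarrow> ('a \<Rightarrow> real) \<Rightarrow> real" where
  "l2_norm m f = sqrt (l2_inner m f f)"

definition op_norm :: "('a \<Rightarrow> real) \<Rightarrow> (('a \<Rightarrow> real) \<Rightarrow> ('a \<Rightarrow> real)) \<Rightarrow> real" where
  "op_norm m T = Sup {l2_norm m (T f) | f. in_l2 m f \<and> l2_norm m f \<le> 1}"

definition laplacian :: "('a \<Rightarrow> 'a \<Rightarrow> real) \<Rightarrow> ('a \<Rightarrow> real) \<Rightarrow> ('a \<Rightarrow> real) \<Rightarrow> ('a \<Rightarrow> real)" where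
  "laplacian b m f = (\<lambda>x. (1 / m x) * (\<Sum>\<^sub>\<infinity>y. b x y * (f x - f y)))"

text \<open>E is the spectral resolution of the bounded selfadjoint operator H on l^2(X,m):
  E A is an orthogonal projection for every Borel set A, E is multiplicative, E UNIV = id,
  E is supported in a compact interval, and for every f the map A \<mapsto> <E A f, f> is a
  finite Borel measure mu_f with <H f, f> = integral of lambda d mu_f, i.e. H = integral of lambda dE.
  Then P_I(H) = E I.\<close>

definition spectral_resolution ::
  "('a \<Rightarrow> real) \<Rightarrow> (('a \<Rightarrow> real) \<Rightarrow> ('a \<Rightarrow> real)) \<Rightarrow> (real set \<Rightarrow> ('a \<Rightarrow> real) \<Rightarrow> ('a \<Rightarrow> real)) \<Rightarrow> bool"
where
  "spectral_resolution m H E \<longleftrightarrow>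
     (\<forall>A\<in>sets borel. \<forall>f. in_l2 m f \<longrightarrow> in_l2 m (E A f)) \<and>
     (\<forall>A\<in>sets borel. \<forall>f g c. in_l2 m f \<longrightarrow> in_l2 m g \<longrightarrow>
          E A (\<lambda>x. f x + c * g x) = (\<lambda>x. E A f x + c * E A g x)) \<and>
     (\<forall>A\<in>sets borel. \<forall>f g. in_l2 m f \<longrightarrow> in_l2 m g \<longrightarrow>
          l2_inner m (E A f) g = l2_inner m f (E A g)) \<and>
     (\<forall>A\<in>sets borel. \<forall>B\<in>sets borel. \<forall>f. in_l2 m f \<longrightarrow> E (A \<inter> B) f = E A (E B f)) \<and>
     (\<forall>f. in_l2 m f \<longrightarrow> E UNIV f = f) \<and>
     (\<exists>c. \<forall>f. in_l2 m f \<longrightarrow> E (UNIV - {-c..c}) f = (\<lambda>x. 0)) \<and>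
     (\<forall>f. in_l2 m f \<longrightarrow>
        (\<exists>\<mu>. finite_measure \<mu> \<and> sets \<mu> = sets borel \<and>
             (\<forall>A\<in>sets borel. measure \<mu> A = l2_inner m (E A f) f) \<and>
             integrable \<mu> (\<lambda>t. t) \<and>
             l2_inner m (H f) f = (\<integral>t. t \<partial>\<mu>)))"

end

theory Submission
  imports Defs
begin

lemma sum_dom:
  fixes F G :: "'b \<Rightarrow> real"
  assumes "G summable_on A" "\<And>x. x\<in>A \<Longrightarrow> \<bar>F x\<bar> \<le> G x"
  shows "F summable_on A"
proof -
  have "(\<lambda>x. norm (F x)) summable_on A"
    by (rule summable_on_comparison_test[OF assms(1)]) (use assms(2) in auto)
  then show ?thesis by (rule abs_summable_summable)
qed

lemma num1: fixes a c :: real shows "\<bar>(a-c)*a\<bar> \<le> 2*a\<^sup>2 + 2*c\<^sup>2"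
proof -
  have h1: "0 \<le> (a-c)*(a-c)" and h2: "0 \<le> (a+c)*(a+c)" by auto
  have e1: "(a-c)*a = a*a - a*c" by (simp add: algebra_simps)
  have "2*(a*c) \<le> a*a + c*c" using h1 by (simp add: algebra_simps)
  moreover have "-(2*(a*c)) \<le> a*a + c*c" using h2 by (simp add: algebra_simps)
  moreover have "0 \<le> a*a" "0 \<le> c*c" by auto
  ultimately show ?thesis using e1 unfolding abs_le_iff power2_eq_square by linarith
qed
lemma num2: fixes a c :: real shows "(a-c)\<^sup>2 \<le> 2*a\<^sup>2 + 2*c\<^sup>2"
proof -
  have h2: "0 \<le> (a+c)*(a+c)" by auto
  then show ?thesis unfolding power2_eq_square by (auto simp: algebra_simps)
qed
lemma num3: fixes a c t :: real assumes "t > 0" shows "(a-c)\<^sup>2 \<le> (1+t)*a\<^sup>2 + (1+1/t)*c\<^sup>2"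
proof -
  have "t*((1+t)*a\<^sup>2 + (1+1/t)*c\<^sup>2 - (a-c)\<^sup>2) = (t*a+c)\<^sup>2"
    using assms by (simp add: field_simps power2_eq_square)
  then have "0 \<le> t*((1+t)*a\<^sup>2 + (1+1/t)*c\<^sup>2 - (a-c)\<^sup>2)" by simp
  then show ?thesis using assms by (simp add: zero_le_mult_iff)
qed
lemma num4: fixes a :: real shows "\<bar>a\<bar> \<le> 1 + a\<^sup>2"
proof -
  have "0 \<le> (\<bar>a\<bar> - 1)\<^sup>2" by simp
  then show ?thesis unfolding power2_eq_square by (auto simp: algebra_simps abs_mult_self_eq)
qed

lemma cmr: "f summable_on A \<Longrightarrow> infsum (\<lambda>x. c * f x) A = c * infsum f A"
  for f :: "'b \<Rightarrow> real" by (rule infsum_cmult_right) simp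

lemma num6: fixes a c :: real shows "\<bar>a * c\<bar> \<le> a\<^sup>2 + c\<^sup>2"
proof -
  have "0 \<le> (\<bar>a\<bar> - \<bar>c\<bar>)\<^sup>2" by simp
  then have "2 * (\<bar>a\<bar> * \<bar>c\<bar>) \<le> a\<^sup>2 + c\<^sup>2" by (simp add: power2_eq_square algebra_simps)
  moreover have "0 \<le> \<bar>a\<bar> * \<bar>c\<bar>" by simp
  ultimately show ?thesis unfolding abs_mult by linarith
qed

lemma num5: fixes C X :: real shows "2 * (C + 1)\<^sup>2 * X + 2 * C * (C * X) = (2 * (C + 1)\<^sup>2 + 2 * C\<^sup>2) * X"
  by (simp add: power2_eq_square algebra_simps)

lemma infsum_single:
  fixes f :: "'b \<Rightarrow> real"
  assumes "\<And>z. z \<noteq> y \<Longrightarrow> f z = 0"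
  shows "infsum f UNIV = f y" and "f summable_on UNIV"
proof -
  have "infsum f UNIV = infsum f {y}"
    by (rule infsum_cong_neutral) (use assms in auto)
  then show "infsum f UNIV = f y" by simp
  show "f summable_on UNIV"
    by (rule finite_nonzero_values_imp_summable_on) (use assms in \<open>auto intro: finite_subset[of _ "{y}"]\<close>)
qed

lemma CS_inf:
  fixes w a :: "'b \<Rightarrow> real"
  assumes w0: "\<And>y. 0 \<le> w y" and s0: "w summable_on UNIV" and s1: "(\<lambda>y. w y * a y) summable_on UNIV"
    and s2: "(\<lambda>y. w y * (a y)\<^sup>2) summable_on UNIV"
  shows "(\<Sum>\<^sub>\<infinity>y. w y * a y)\<^sup>2 \<le> (\<Sum>\<^sub>\<infinity>y. w y) * (\<Sum>\<^sub>\<infinity>y. w y * (a y)\<^sup>2)"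
proof -
  define W S T where "W = (\<Sum>\<^sub>\<infinity>y. w y)" and "S = (\<Sum>\<^sub>\<infinity>y. w y * a y)" and "T = (\<Sum>\<^sub>\<infinity>y. w y * (a y)\<^sup>2)"
  have W0: "0 \<le> W" unfolding W_def by (rule infsum_nonneg) (use w0 in auto)
  have key: "0 \<le> T - 2 * s * S + s\<^sup>2 * W" for s
  proof -
    have e: "(\<lambda>y. w y * (a y - s)\<^sup>2) = (\<lambda>y. w y * (a y)\<^sup>2 + ((-2 * s) * (w y * a y) + s\<^sup>2 * w y))"
      by (auto simp: fun_eq_iff power2_eq_square algebra_simps)
    have sa: "(\<lambda>y. (-2 * s) * (w y * a y)) summable_on UNIV" using s1 by (rule summable_on_cmult_right)
    have sb: "(\<lambda>y. s\<^sup>2 * w y) summable_on UNIV" using s0 by (rule summable_on_cmult_right)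
    have c1: "(\<Sum>\<^sub>\<infinity>y. (-2 * s) * (w y * a y)) = (-2 * s) * S" unfolding S_def using s1 by (rule cmr)
    have c2: "(\<Sum>\<^sub>\<infinity>y. s\<^sup>2 * w y) = s\<^sup>2 * W" unfolding W_def using s0 by (rule cmr)
    have "(\<Sum>\<^sub>\<infinity>y. w y * (a y - s)\<^sup>2) = T + ((-2 * s) * S + s\<^sup>2 * W)"
      unfolding e T_def
      using infsum_add[OF s2 summable_on_add[OF sa sb]] infsum_add[OF sa sb] c1 c2
      by simp
    moreover have "0 \<le> (\<Sum>\<^sub>\<infinity>y. w y * (a y - s)\<^sup>2)" by (rule infsum_nonneg) (use w0 in auto)
    ultimately show ?thesis by simp
  qed
  show ?thesis
  proof (cases "W = 0")
    case True
    have "w y = 0" for y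
      using nonneg_infsum_le_0D[of w UNIV y] True s0 w0 unfolding W_def by auto
    then have "S = 0" unfolding S_def by simp
    then show ?thesis using True W_def S_def T_def by simp
  next
    case False
    then have Wp: "W > 0" using W0 by simp
    have "0 \<le> T - 2 * (S/W) * S + (S/W)\<^sup>2 * W" by (rule key)
    also have "\<dots> = T - S\<^sup>2 / W" using Wp by (simp add: power2_eq_square field_simps)
    finally have "S\<^sup>2 / W \<le> T" by simp
    then have "S\<^sup>2 \<le> T * W" using Wp by (simp add: divide_le_eq)
    then show ?thesis unfolding W_def S_def T_def by (simp add: mult.commute)
  qed
qed

lemma pair_fub:
  fixes f :: "'a \<Rightarrow> 'b \<Rightarrow> real"
  assumes "(\<lambda>(x,y). f x y) summable_on UNIV"
  shows "(\<Sum>\<^sub>\<infinity>(x,y). f x y) = (\<Sum>\<^sub>\<infinity>x. \<Sum>\<^sub>\<infinity>y. f x y)"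
    and "(\<lambda>x. \<Sum>\<^sub>\<infinity>y. f x y) summable_on UNIV"
    and "f x summable_on UNIV"
proof -
  have S: "(\<lambda>(x,y). f x y) summable_on (UNIV \<times> UNIV)"
    using assms by (simp only: UNIV_Times_UNIV)
  show "(\<Sum>\<^sub>\<infinity>(x,y). f x y) = (\<Sum>\<^sub>\<infinity>x. \<Sum>\<^sub>\<infinity>y. f x y)"
    using infsum_Sigma'_banach[OF S] by (simp only: UNIV_Times_UNIV)
  show "(\<lambda>x. \<Sum>\<^sub>\<infinity>y. f x y) summable_on UNIV"
    using summable_on_Sigma_banach[OF S] by simp
  show "f x summable_on UNIV"
    using summable_on_SigmaD1[OF S] by simp
qed

lemma pair_swap_summable:
  fixes f :: "'a \<Rightarrow> 'a \<Rightarrow> real"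
  assumes "(\<lambda>(x,y). f x y) summable_on UNIV"
  shows "(\<lambda>(x,y). f y x) summable_on UNIV"
proof -
  have "(\<lambda>(x,y). f y x) = (\<lambda>(x,y). f x y) \<circ> prod.swap" by auto
  then show ?thesis
    using summable_on_reindex[OF inj_swap[of UNIV], of "\<lambda>(x,y). f x y", unfolded surj_swap] assms
    by simp
qed

lemma pair_swap_infsum:
  fixes f :: "'a \<Rightarrow> 'a \<Rightarrow> real"
  shows "(\<Sum>\<^sub>\<infinity>(x,y). f y x) = (\<Sum>\<^sub>\<infinity>(x,y). f x y)"
proof -
  have "(\<lambda>(x,y). f y x) = (\<lambda>(x,y). f x y) \<circ> prod.swap" by auto
  then show ?thesis
    using infsum_reindex[OF inj_swap[of UNIV], of "\<lambda>(x,y). f x y", unfolded surj_swap]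
    by simp
qed

locale WG =
  fixes b :: "'a::countable \<Rightarrow> 'a \<Rightarrow> real" and m :: "'a \<Rightarrow> real" and C :: real
  assumes sym: "\<And>x y. b x y = b y x" and b0: "\<And>x. b x x = 0" and bnn: "\<And>x y. 0 \<le> b x y"
    and bsum: "\<And>x. b x summable_on UNIV" and mpos: "\<And>x. 0 < m x"
    and degC: "\<And>x. (\<Sum>\<^sub>\<infinity>y. b x y) \<le> C * m x"
begin

definition deg where "deg x = (\<Sum>\<^sub>\<infinity>y. b x y)"

lemma deg_nn: "0 \<le> deg x"
  unfolding deg_def by (rule infsum_nonneg) (simp add: bnn)

lemma degC': "deg x \<le> C * m x" using degC unfolding deg_def by simp

lemma C_nn: "0 \<le> C"
proof -
  have "0 \<le> C * m undefined" using deg_nn degC' order_trans by blast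
  then show ?thesis using mpos[of undefined] by (simp add: zero_le_mult_iff)
qed

lemma has_deg: "(b x has_sum deg x) UNIV"
  unfolding deg_def using bsum by (simp add: has_sum_infsum)

lemma b_le_deg: "b x y \<le> deg x"
proof -
  have "sum (b x) {y} \<le> infsum (b x) UNIV"
    by (rule finite_sum_le_infsum) (auto simp: bsum bnn)
  then show ?thesis by (simp add: deg_def)
qed

lemma l2_prod_summable:
  assumes "in_l2 m f" "in_l2 m g"
  shows "(\<lambda>x. m x * f x * g x) summable_on UNIV"
proof (rule sum_dom)
  show "(\<lambda>x. m x * (f x)\<^sup>2 + m x * (g x)\<^sup>2) summable_on UNIV"
    using assms unfolding in_l2_def by (intro summable_on_add)
  fix x
  have "\<bar>f x * g x\<bar> \<le> (f x)\<^sup>2 + (g x)\<^sup>2"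
    by (rule num6)
  then have "m x * \<bar>f x * g x\<bar> \<le> m x * ((f x)\<^sup>2 + (g x)\<^sup>2)"
    using mpos[of x] by (intro mult_left_mono) auto
  then show "\<bar>m x * f x * g x\<bar> \<le> m x * (f x)\<^sup>2 + m x * (g x)\<^sup>2"
    using mpos[of x] by (simp add: abs_mult algebra_simps)
qed

lemma deg_l2_summable:
  assumes "in_l2 m f"
  shows "(\<lambda>x. deg x * (f x)\<^sup>2) summable_on UNIV"
proof (rule sum_dom)
  show "(\<lambda>x. C * (m x * (f x)\<^sup>2)) summable_on UNIV"
    using assms unfolding in_l2_def by (intro summable_on_cmult_right)
  fix x show "\<bar>deg x * (f x)\<^sup>2\<bar> \<le> C * (m x * (f x)\<^sup>2)"
    using degC'[of x] deg_nn[of x] by (simp add: abs_mult) (metis mult.assoc mult_right_mono zero_le_power2)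
qed

lemma pair1_summable:
  assumes "in_l2 m f"
  shows "(\<lambda>(x,y). b x y * (f x)\<^sup>2) summable_on UNIV"
proof -
  have "(\<lambda>(x,y). b x y * (f x)\<^sup>2) summable_on Sigma UNIV (\<lambda>_. UNIV)"
  proof (rule summable_on_SigmaI)
    fix x :: 'a
    show "((\<lambda>y. case (x, y) of (x, y) \<Rightarrow> b x y * (f x)\<^sup>2) has_sum deg x * (f x)\<^sup>2) UNIV"
      using has_sum_cmult_left[OF has_deg[of x], of "(f x)\<^sup>2"] by simp
  qed (use deg_l2_summable[OF assms] bnn in auto)
  then show ?thesis by simp
qed

lemma pair1_infsum:
  assumes "in_l2 m f"
  shows "(\<Sum>\<^sub>\<infinity>(x,y). b x y * (f x)\<^sup>2) = (\<Sum>\<^sub>\<infinity>x. deg x * (f x)\<^sup>2)"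
proof -
  have S: "(\<lambda>(x,y). b x y * (f x)\<^sup>2) summable_on (UNIV \<times> UNIV)"
    using pair1_summable[OF assms] by (simp only: UNIV_Times_UNIV)
  have "(\<Sum>\<^sub>\<infinity>(x,y). b x y * (f x)\<^sup>2) = (\<Sum>\<^sub>\<infinity>x. \<Sum>\<^sub>\<infinity>y. b x y * (f x)\<^sup>2)"
    using infsum_Sigma'_banach[OF S] by (simp only: UNIV_Times_UNIV)
  also have "\<dots> = (\<Sum>\<^sub>\<infinity>x. deg x * (f x)\<^sup>2)"
  proof (rule infsum_cong)
    fix x show "(\<Sum>\<^sub>\<infinity>y. b x y * (f x)\<^sup>2) = deg x * (f x)\<^sup>2"
      unfolding deg_def by (rule infsum_cmult_left) (simp add: bsum)
  qed
  finally show ?thesis .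
qed

lemma swap_eq: "(\<lambda>(x,y). b x y * (f y)\<^sup>2) = (\<lambda>(x,y). b x y * (f x)\<^sup>2) \<circ> prod.swap"
proof (rule ext, clarify)
  fix x y have "b x y * (f y)\<^sup>2 = b y x * (f y)\<^sup>2" by (metis sym)
  then show "b x y * (f y)\<^sup>2 = ((\<lambda>(x,y). b x y * (f x)\<^sup>2) \<circ> prod.swap) (x,y)"
    by (simp only: comp_apply swap_simp prod.case)
qed

lemma pair2_summable:
  assumes "in_l2 m f"
  shows "(\<lambda>(x,y). b x y * (f y)\<^sup>2) summable_on UNIV"
  unfolding swap_eq
  using summable_on_reindex[OF inj_swap[of UNIV], of "\<lambda>(x,y). b x y * (f x)\<^sup>2", unfolded surj_swap] pair1_summable[OF assms]
  by blast

lemma pair2_infsum: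
  assumes "in_l2 m f"
  shows "(\<Sum>\<^sub>\<infinity>(x,y). b x y * (f y)\<^sup>2) = (\<Sum>\<^sub>\<infinity>x. deg x * (f x)\<^sup>2)"
  unfolding swap_eq
  using infsum_reindex[OF inj_swap[of UNIV], of "\<lambda>(x,y). b x y * (f x)\<^sup>2", unfolded surj_swap] pair1_infsum[OF assms]
  by simp


lemma row_summable:
  assumes "in_l2 m f"
  shows "(\<lambda>y. b x y * (f x - f y)) summable_on UNIV"
proof -
  have s1: "(\<lambda>y. b x y * f x) summable_on UNIV"
    using bsum by (intro summable_on_cmult_left)
  have s2: "(\<lambda>y. b x y * f y) summable_on UNIV"
  proof (rule sum_dom)
    show "(\<lambda>y. b x y + C * (m y * (f y)\<^sup>2)) summable_on UNIV"
      using assms bsum unfolding in_l2_def by (intro summable_on_add summable_on_cmult_right) auto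
    fix y
    have "b x y = b y x" by (rule sym)
    also have "\<dots> \<le> deg y" by (rule b_le_deg)
    also have "\<dots> \<le> C * m y" by (rule degC')
    finally have bb: "b x y \<le> C * m y" .
    have "\<bar>b x y * f y\<bar> = b x y * \<bar>f y\<bar>" using bnn[of x y] by (simp add: abs_mult)
    also have "\<dots> \<le> b x y * (1 + (f y)\<^sup>2)" using bnn[of x y] num4[of "f y"] by (intro mult_left_mono) auto
    also have "\<dots> = b x y + b x y * (f y)\<^sup>2" by (simp add: algebra_simps)
    also have "\<dots> \<le> b x y + C * m y * (f y)\<^sup>2" using bb by (intro add_left_mono mult_right_mono) auto
    finally show "\<bar>b x y * f y\<bar> \<le> b x y + C * (m y * (f y)\<^sup>2)" by (simp add: mult.assoc)
  qed
  have s3: "(\<lambda>y. (-1) * (b x y * f y)) summable_on UNIV" by (rule summable_on_cmult_right[OF s2])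
  have "(\<lambda>y. b x y * f x + (-1) * (b x y * f y)) summable_on UNIV"
    using summable_on_add[OF s1 s3] by simp
  then show ?thesis by (simp add: right_diff_distrib)
qed

lemma pairsq_summable:
  assumes "in_l2 m f"
  shows "(\<lambda>(x,y). b x y * (f x - f y)\<^sup>2) summable_on UNIV"
proof (rule sum_dom)
  show "(\<lambda>(x,y). 2 * (b x y * (f x)\<^sup>2) + 2 * (b x y * (f y)\<^sup>2)) summable_on UNIV"
    using summable_on_add[OF summable_on_cmult_right[OF pair1_summable[OF assms]]
                             summable_on_cmult_right[OF pair2_summable[OF assms]], of 2 2]
    by (simp add: case_prod_unfold)
  fix p :: "'a \<times> 'a"
  obtain x y where p: "p = (x,y)" by fastforce
  have "b x y * (f x - f y)\<^sup>2 \<le> b x y * (2 * (f x)\<^sup>2 + 2 * (f y)\<^sup>2)"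
    using bnn[of x y] num2 by (intro mult_left_mono) auto
  then show "\<bar>(\<lambda>(x,y). b x y * (f x - f y)\<^sup>2) p\<bar> \<le> (\<lambda>(x,y). 2 * (b x y * (f x)\<^sup>2) + 2 * (b x y * (f y)\<^sup>2)) p"
    using bnn[of x y] unfolding p by (simp add: algebra_simps)
qed

lemma pairF1_summable:
  assumes "in_l2 m f"
  shows "(\<lambda>(x,y). b x y * (f x - f y) * f x) summable_on UNIV"
proof (rule sum_dom)
  show "(\<lambda>(x,y). 2 * (b x y * (f x)\<^sup>2) + 2 * (b x y * (f y)\<^sup>2)) summable_on UNIV"
    using summable_on_add[OF summable_on_cmult_right[OF pair1_summable[OF assms]]
                             summable_on_cmult_right[OF pair2_summable[OF assms]], of 2 2]
    by (simp add: case_prod_unfold)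
  fix p :: "'a \<times> 'a"
  obtain x y where p: "p = (x,y)" by fastforce
  have "b x y * \<bar>(f x - f y) * f x\<bar> \<le> b x y * (2 * (f x)\<^sup>2 + 2 * (f y)\<^sup>2)"
    using bnn[of x y] num1 by (intro mult_left_mono) auto
  moreover have "\<bar>b x y * (f x - f y) * f x\<bar> = b x y * \<bar>(f x - f y) * f x\<bar>"
    using bnn[of x y] by (simp add: abs_mult)
  ultimately show "\<bar>(\<lambda>(x,y). b x y * (f x - f y) * f x) p\<bar> \<le> (\<lambda>(x,y). 2 * (b x y * (f x)\<^sup>2) + 2 * (b x y * (f y)\<^sup>2)) p"
    unfolding p prod.case by (simp add: algebra_simps)
qed

definition Q where "Q f = (\<Sum>\<^sub>\<infinity>(x,y). b x y * (f x - f y)\<^sup>2) / 2"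

lemma Q_nn: "0 \<le> Q f"
  unfolding Q_def by (intro divide_nonneg_pos infsum_nonneg) (auto simp: bnn)

lemma green:
  assumes "in_l2 m f"
  shows "l2_inner m (laplacian b m f) f = Q f"
proof -
  have "l2_inner m (laplacian b m f) f = (\<Sum>\<^sub>\<infinity>x. \<Sum>\<^sub>\<infinity>y. b x y * (f x - f y) * f x)"
    unfolding l2_inner_def laplacian_def
  proof (rule infsum_cong)
    fix x
    have "m x * (1 / m x * (\<Sum>\<^sub>\<infinity>y. b x y * (f x - f y))) * f x = (\<Sum>\<^sub>\<infinity>y. b x y * (f x - f y)) * f x"
      using mpos[of x] by simp
    also have "\<dots> = (\<Sum>\<^sub>\<infinity>y. b x y * (f x - f y) * f x)"
      by (rule infsum_cmult_left[symmetric]) (use row_summable[OF assms] in auto)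
    finally show "m x * (1 / m x * (\<Sum>\<^sub>\<infinity>y. b x y * (f x - f y))) * f x = (\<Sum>\<^sub>\<infinity>y. b x y * (f x - f y) * f x)" .
  qed
  also have "\<dots> = (\<Sum>\<^sub>\<infinity>(x,y). b x y * (f x - f y) * f x)"
    using pair_fub(1)[OF pairF1_summable[OF assms]] by simp
  finally have e1: "l2_inner m (laplacian b m f) f = (\<Sum>\<^sub>\<infinity>(x,y). b x y * (f x - f y) * f x)" .
  have e2: "(\<Sum>\<^sub>\<infinity>(x,y). b x y * (f x - f y) * f x) = (\<Sum>\<^sub>\<infinity>(x,y). b x y * (f y - f x) * f y)"
  proof -
    have "(\<Sum>\<^sub>\<infinity>(x,y). b x y * (f y - f x) * f y) = (\<Sum>\<^sub>\<infinity>(x,y). b y x * (f y - f x) * f y)"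
      by (rule infsum_cong) (auto simp: sym[of _ _])
    also have "\<dots> = (\<Sum>\<^sub>\<infinity>(x,y). b x y * (f x - f y) * f x)"
      by (rule pair_swap_infsum[of "\<lambda>x y. b x y * (f x - f y) * f x"])
    finally show ?thesis by simp
  qed
  have S2: "(\<lambda>(x,y). b x y * (f y - f x) * f y) summable_on UNIV"
  proof -
    have "(\<lambda>(x,y). b y x * (f y - f x) * f y) summable_on UNIV"
      by (rule pair_swap_summable[of "\<lambda>x y. b x y * (f x - f y) * f x"]) (use pairF1_summable[OF assms] in simp)
    moreover have "(\<lambda>(x,y). b y x * (f y - f x) * f y) = (\<lambda>(x,y). b x y * (f y - f x) * f y)"
      by (auto simp: fun_eq_iff intro: arg_cong[where f="\<lambda>t. t * _"] sym)
    ultimately show ?thesis by simp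
  qed
  have "2 * l2_inner m (laplacian b m f) f = (\<Sum>\<^sub>\<infinity>(x,y). b x y * (f x - f y) * f x) + (\<Sum>\<^sub>\<infinity>(x,y). b x y * (f y - f x) * f y)"
    using e1 e2 by simp
  also have "\<dots> = (\<Sum>\<^sub>\<infinity>(x,y). b x y * (f x - f y) * f x + b x y * (f y - f x) * f y)"
    using infsum_add[OF pairF1_summable[OF assms] S2] by (simp add: case_prod_unfold)
  also have "\<dots> = (\<Sum>\<^sub>\<infinity>(x,y). b x y * (f x - f y)\<^sup>2)"
    by (rule infsum_cong) (auto simp: power2_eq_square algebra_simps)
  finally show ?thesis unfolding Q_def by simp
qed

lemma Q_bound:
  assumes "in_l2 m f" and C2: "\<And>x. deg x \<le> C2 * m x"
  shows "Q f \<le> 2 * C2 * (\<Sum>\<^sub>\<infinity>x. m x * (f x)\<^sup>2)"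
proof -
  have sd: "(\<lambda>x. deg x * (f x)\<^sup>2) summable_on UNIV" by (rule deg_l2_summable[OF assms(1)])
  have sm: "(\<lambda>x. C2 * (m x * (f x)\<^sup>2)) summable_on UNIV"
    using assms(1) unfolding in_l2_def by (intro summable_on_cmult_right)
  have A: "(\<Sum>\<^sub>\<infinity>x. deg x * (f x)\<^sup>2) \<le> (\<Sum>\<^sub>\<infinity>x. C2 * (m x * (f x)\<^sup>2))"
    by (rule infsum_mono[OF sd sm]) (metis C2 mult.assoc mult_right_mono zero_le_power2)
  have B: "(\<Sum>\<^sub>\<infinity>x. C2 * (m x * (f x)\<^sup>2)) = C2 * (\<Sum>\<^sub>\<infinity>x. m x * (f x)\<^sup>2)"
    by (rule infsum_cmult_right) (use assms(1) in \<open>auto simp: in_l2_def\<close>)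
  have s12: "(\<lambda>(x,y). 2 * (b x y * (f x)\<^sup>2) + 2 * (b x y * (f y)\<^sup>2)) summable_on UNIV"
    using summable_on_add[OF summable_on_cmult_right[OF pair1_summable[OF assms(1)]]
                             summable_on_cmult_right[OF pair2_summable[OF assms(1)]], of 2 2]
    by (simp add: case_prod_unfold)
  have "(\<Sum>\<^sub>\<infinity>(x,y). b x y * (f x - f y)\<^sup>2) \<le> (\<Sum>\<^sub>\<infinity>(x,y). 2 * (b x y * (f x)\<^sup>2) + 2 * (b x y * (f y)\<^sup>2))"
  proof (rule infsum_mono[OF pairsq_summable[OF assms(1)] s12])
    fix p :: "'a \<times> 'a"
    obtain x y where p: "p = (x,y)" by fastforce
    have "b x y * (f x - f y)\<^sup>2 \<le> b x y * (2 * (f x)\<^sup>2 + 2 * (f y)\<^sup>2)"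
      using bnn[of x y] num2 by (intro mult_left_mono) auto
    then show "(\<lambda>(x,y). b x y * (f x - f y)\<^sup>2) p \<le> (\<lambda>(x,y). 2 * (b x y * (f x)\<^sup>2) + 2 * (b x y * (f y)\<^sup>2)) p"
      unfolding p by (simp add: algebra_simps)
  qed
  also have "\<dots> = 2 * (\<Sum>\<^sub>\<infinity>(x,y). b x y * (f x)\<^sup>2) + 2 * (\<Sum>\<^sub>\<infinity>(x,y). b x y * (f y)\<^sup>2)"
    using infsum_add[OF summable_on_cmult_right[OF pair1_summable[OF assms(1)]]
                             summable_on_cmult_right[OF pair2_summable[OF assms(1)]], of 2 2]
      cmr[OF pair1_summable[OF assms(1)], of 2]
      cmr[OF pair2_summable[OF assms(1)], of 2]
    by (simp add: case_prod_unfold)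
  also have "\<dots> = 4 * (\<Sum>\<^sub>\<infinity>x. deg x * (f x)\<^sup>2)"
    using pair1_infsum[OF assms(1)] pair2_infsum[OF assms(1)] by simp
  finally show ?thesis unfolding Q_def using A B by linarith
qed

lemma Q_split:
  assumes "in_l2 m g" "in_l2 m h" "in_l2 m k" "\<And>x. k x = g x - h x" "t > 0"
  shows "Q k \<le> (1 + t) * Q g + (1 + 1/t) * Q h"
proof -
  have sg: "(\<lambda>(x,y). (1+t) * (b x y * (g x - g y)\<^sup>2)) summable_on UNIV"
    using summable_on_cmult_right[OF pairsq_summable[OF assms(1)]] by (simp add: case_prod_unfold)
  have sh: "(\<lambda>(x,y). (1+1/t) * (b x y * (h x - h y)\<^sup>2)) summable_on UNIV"
    using summable_on_cmult_right[OF pairsq_summable[OF assms(2)]] by (simp add: case_prod_unfold)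
  have "(\<Sum>\<^sub>\<infinity>(x,y). b x y * (k x - k y)\<^sup>2)
      \<le> (\<Sum>\<^sub>\<infinity>(x,y). (1+t) * (b x y * (g x - g y)\<^sup>2) + (1+1/t) * (b x y * (h x - h y)\<^sup>2))"
  proof (rule infsum_mono[OF pairsq_summable[OF assms(3)]])
    show "(\<lambda>(x,y). (1+t) * (b x y * (g x - g y)\<^sup>2) + (1+1/t) * (b x y * (h x - h y)\<^sup>2)) summable_on UNIV"
      using summable_on_add[OF sg sh] by (simp add: case_prod_unfold)
    fix p :: "'a \<times> 'a"
    obtain x y where p: "p = (x,y)" by fastforce
    have e: "k x - k y = (g x - g y) - (h x - h y)" using assms(4) by simp
    have "b x y * (k x - k y)\<^sup>2 \<le> b x y * ((1+t) * (g x - g y)\<^sup>2 + (1+1/t) * (h x - h y)\<^sup>2)"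
      unfolding e using bnn[of x y] num3[OF assms(5)] by (intro mult_left_mono) auto
    then show "(\<lambda>(x,y). b x y * (k x - k y)\<^sup>2) p \<le> (\<lambda>(x,y). (1+t) * (b x y * (g x - g y)\<^sup>2) + (1+1/t) * (b x y * (h x - h y)\<^sup>2)) p"
      unfolding p by (simp add: algebra_simps)
  qed
  also have "\<dots> = (1+t) * (\<Sum>\<^sub>\<infinity>(x,y). b x y * (g x - g y)\<^sup>2) + (1+1/t) * (\<Sum>\<^sub>\<infinity>(x,y). b x y * (h x - h y)\<^sup>2)"
    using infsum_add[OF sg sh]
      cmr[OF pairsq_summable[OF assms(1)], of "1+t"]
      cmr[OF pairsq_summable[OF assms(2)], of "1+1/t"]
    by (simp add: case_prod_unfold)
  finally show ?thesis unfolding Q_def by (simp add: field_simps)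
qed


lemma row2_summable:
  assumes "in_l2 m f"
  shows "(\<lambda>y. b x y * (f y)\<^sup>2) summable_on UNIV"
  using pair_fub(3)[OF pair2_summable[OF assms], of x] by simp

lemma row3_summable:
  assumes "in_l2 m f"
  shows "(\<lambda>y. b x y * f y) summable_on UNIV"
proof -
  have s3: "(\<lambda>y. (-1) * (b x y * (f x - f y))) summable_on UNIV"
    by (rule summable_on_cmult_right[OF row_summable[OF assms]])
  have s1: "(\<lambda>y. b x y * f x) summable_on UNIV" by (rule summable_on_cmult_left[OF bsum[of x]])
  have "(\<lambda>y. b x y * f x + (-1) * (b x y * (f x - f y))) summable_on UNIV"
    using summable_on_add[OF s1 s3] by simp
  then show ?thesis by (simp add: algebra_simps)
qed

lemma lap_eq:
  assumes "in_l2 m f"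
  shows "laplacian b m f x = (deg x * f x - (\<Sum>\<^sub>\<infinity>y. b x y * f y)) / m x"
proof -
  have "(\<Sum>\<^sub>\<infinity>y. b x y * (f x - f y)) = (\<Sum>\<^sub>\<infinity>y. b x y * f x + - (b x y * f y))"
    by (simp add: algebra_simps)
  also have "\<dots> = (\<Sum>\<^sub>\<infinity>y. b x y * f x) + (\<Sum>\<^sub>\<infinity>y. - (b x y * f y))"
  proof (rule infsum_add)
    show "(\<lambda>y. b x y * f x) summable_on UNIV" by (rule summable_on_cmult_left[OF bsum[of x]])
    have "(\<lambda>y. (-1) * (b x y * f y)) summable_on UNIV" by (rule summable_on_cmult_right[OF row3_summable[OF assms]])
    then show "(\<lambda>y. - (b x y * f y)) summable_on UNIV" by simp
  qed
  also have "\<dots> = deg x * f x - (\<Sum>\<^sub>\<infinity>y. b x y * f y)"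
    unfolding infsum_uminus deg_def using infsum_cmult_left[of "f x" "b x" UNIV] bsum by simp
  finally show ?thesis unfolding laplacian_def by simp
qed

definition K where "K = 2 * (C + 1)\<^sup>2 + 2 * C\<^sup>2"

lemma op_bound:
  assumes "in_l2 m f"
  defines "F \<equiv> (\<lambda>x. laplacian b m f x + f x)"
  shows "in_l2 m F" and "(\<Sum>\<^sub>\<infinity>x. m x * (F x)\<^sup>2) \<le> K * (\<Sum>\<^sub>\<infinity>x. m x * (f x)\<^sup>2)"
proof -
  define R where "R x = (\<Sum>\<^sub>\<infinity>y. b x y * (f y)\<^sup>2)" for x
  have Rs: "R summable_on UNIV"
    using pair_fub(2)[OF pair2_summable[OF assms(1)]] unfolding R_def by simp
  have Rsum: "(\<Sum>\<^sub>\<infinity>x. R x) \<le> C * (\<Sum>\<^sub>\<infinity>x. m x * (f x)\<^sup>2)"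
  proof -
    have "(\<Sum>\<^sub>\<infinity>x. R x) = (\<Sum>\<^sub>\<infinity>x. deg x * (f x)\<^sup>2)"
      using pair_fub(1)[OF pair2_summable[OF assms(1)]] pair2_infsum[OF assms(1)] unfolding R_def by simp
    also have "\<dots> \<le> (\<Sum>\<^sub>\<infinity>x. C * (m x * (f x)\<^sup>2))"
      by (rule infsum_mono[OF deg_l2_summable[OF assms(1)]])
        (use assms(1) in \<open>auto simp: in_l2_def intro: summable_on_cmult_right, metis degC' mult.assoc mult_right_mono zero_le_power2\<close>)
    also have "\<dots> = C * (\<Sum>\<^sub>\<infinity>x. m x * (f x)\<^sup>2)"
      by (rule cmr) (use assms(1) in \<open>auto simp: in_l2_def\<close>)
    finally show ?thesis .
  qed
  have pw: "m x * (F x)\<^sup>2 \<le> 2 * (C + 1)\<^sup>2 * (m x * (f x)\<^sup>2) + 2 * C * R x" for x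
  proof -
    define P where "P = (\<Sum>\<^sub>\<infinity>y. b x y * f y)"
    have mx: "m x > 0" by (rule mpos)
    have d0: "0 \<le> deg x / m x" using deg_nn mx by simp
    have dC: "deg x / m x \<le> C" using degC'[of x] mx by (simp add: divide_le_eq)
    define u where "u = deg x / m x + 1"
    have Fx: "F x = u * f x - P / m x"
    proof -
      have "F x = (deg x * f x - P) / m x + f x"
        unfolding F_def lap_eq[OF assms(1)] P_def by simp
      also have "\<dots> = deg x * f x / m x - P / m x + f x" by (simp add: diff_divide_distrib)
      also have "\<dots> = u * f x - P / m x" unfolding u_def by (simp add: distrib_right)
      finally show ?thesis .
    qed
    have CS: "P\<^sup>2 \<le> deg x * R x"
      unfolding P_def R_def deg_def
      by (rule CS_inf) (use bnn bsum row3_summable[OF assms(1)] row2_summable[OF assms(1)] in auto)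
    have "(F x)\<^sup>2 \<le> 2 * (u * f x)\<^sup>2 + 2 * (P / m x)\<^sup>2"
      unfolding Fx by (rule num2)
    then have "m x * (F x)\<^sup>2 \<le> m x * (2 * (u * f x)\<^sup>2 + 2 * (P / m x)\<^sup>2)"
      using mx by (intro mult_left_mono) auto
    also have "\<dots> = 2 * u\<^sup>2 * (m x * (f x)\<^sup>2) + 2 * (P\<^sup>2 / m x)"
    proof -
      have h1: "m x * (P / m x)\<^sup>2 = P\<^sup>2 / m x" using mx by (simp add: power2_eq_square)
      have h2: "m x * (u * f x)\<^sup>2 = u\<^sup>2 * (m x * (f x)\<^sup>2)" by (simp add: power_mult_distrib)
      have e3: "m x * (2 * (u * f x)\<^sup>2 + 2 * (P / m x)\<^sup>2) = 2 * (m x * (u * f x)\<^sup>2) + 2 * (m x * (P / m x)\<^sup>2)"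
        by (simp add: algebra_simps)
      show ?thesis unfolding e3 h1 h2 by (simp add: mult.assoc)
    qed
    also have "\<dots> \<le> 2 * (C + 1)\<^sup>2 * (m x * (f x)\<^sup>2) + 2 * (P\<^sup>2 / m x)"
    proof -
      have "u\<^sup>2 \<le> (C + 1)\<^sup>2" unfolding u_def using d0 dC by (intro power_mono) auto
      then show ?thesis using mx by (intro add_right_mono mult_right_mono mult_left_mono) auto
    qed
    also have "\<dots> \<le> 2 * (C + 1)\<^sup>2 * (m x * (f x)\<^sup>2) + 2 * C * R x"
    proof -
      have R0: "0 \<le> R x" unfolding R_def by (rule infsum_nonneg) (simp add: bnn)
      have "P\<^sup>2 / m x \<le> deg x * R x / m x" using CS mx by (simp add: divide_right_mono)
      also have "\<dots> = (deg x / m x) * R x" by simp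
      also have "\<dots> \<le> C * R x" using dC R0 by (rule mult_right_mono)
      finally show ?thesis by simp
    qed
    finally show ?thesis .
  qed
  have sdom: "(\<lambda>x. 2 * (C + 1)\<^sup>2 * (m x * (f x)\<^sup>2) + 2 * C * R x) summable_on UNIV"
    using assms(1) Rs unfolding in_l2_def by (intro summable_on_add summable_on_cmult_right)
  have sF: "(\<lambda>x. m x * (F x)\<^sup>2) summable_on UNIV"
  proof (rule sum_dom[OF sdom])
    fix x
    have "0 \<le> m x * (F x)\<^sup>2" using mpos[of x] by simp
    then show "\<bar>m x * (F x)\<^sup>2\<bar> \<le> 2 * (C + 1)\<^sup>2 * (m x * (f x)\<^sup>2) + 2 * C * R x"
      using pw[of x] by linarith
  qed
  then show "in_l2 m F" unfolding in_l2_def .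
  have "(\<Sum>\<^sub>\<infinity>x. m x * (F x)\<^sup>2) \<le> (\<Sum>\<^sub>\<infinity>x. 2 * (C + 1)\<^sup>2 * (m x * (f x)\<^sup>2) + 2 * C * R x)"
    by (rule infsum_mono[OF sF sdom pw])
  also have "\<dots> = 2 * (C + 1)\<^sup>2 * (\<Sum>\<^sub>\<infinity>x. m x * (f x)\<^sup>2) + 2 * C * (\<Sum>\<^sub>\<infinity>x. R x)"
  proof -
    have sm: "(\<lambda>x. m x * (f x)\<^sup>2) summable_on UNIV" using assms(1) unfolding in_l2_def .
    have "(\<Sum>\<^sub>\<infinity>x. 2 * (C + 1)\<^sup>2 * (m x * (f x)\<^sup>2) + 2 * C * R x)
        = (\<Sum>\<^sub>\<infinity>x. 2 * (C + 1)\<^sup>2 * (m x * (f x)\<^sup>2)) + (\<Sum>\<^sub>\<infinity>x. 2 * C * R x)"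
      by (rule infsum_add[OF summable_on_cmult_right[OF sm] summable_on_cmult_right[OF Rs]])
    also have "\<dots> = 2 * (C + 1)\<^sup>2 * (\<Sum>\<^sub>\<infinity>x. m x * (f x)\<^sup>2) + 2 * C * (\<Sum>\<^sub>\<infinity>x. R x)"
      by (simp only: cmr[OF sm] cmr[OF Rs])
    finally show ?thesis .
  qed
  also have "\<dots> \<le> 2 * (C + 1)\<^sup>2 * (\<Sum>\<^sub>\<infinity>x. m x * (f x)\<^sup>2) + 2 * C * (C * (\<Sum>\<^sub>\<infinity>x. m x * (f x)\<^sup>2))"
    using Rsum C_nn by (intro add_left_mono mult_left_mono) auto
  also have "\<dots> = K * (\<Sum>\<^sub>\<infinity>x. m x * (f x)\<^sup>2)"
    unfolding K_def by (rule num5)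
  finally show "(\<Sum>\<^sub>\<infinity>x. m x * (F x)\<^sup>2) \<le> K * (\<Sum>\<^sub>\<infinity>x. m x * (f x)\<^sup>2)" .
qed

end

fun plen :: "('a \<Rightarrow> 'a \<Rightarrow> real) \<Rightarrow> 'a list \<Rightarrow> real" where
  "plen b (x # y # p) = 1 / b x y + plen b (y # p)"
| "plen b _ = 0"

fun ipath :: "('a \<Rightarrow> 'a \<Rightarrow> real) \<Rightarrow> 'a list \<Rightarrow> bool" where
  "ipath b [] = False"
| "ipath b [x] = True"
| "ipath b (x # y # p) = (0 < b x y \<and> ipath b (y # p))"

fun edges :: "'a list \<Rightarrow> ('a \<times> 'a) list" where
  "edges (x # y # p) = (x, y) # edges (y # p)"
| "edges _ = []"

lemma is_path_ipath: "is_path b p = ipath b p"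
proof (induction b p rule: ipath.induct)
  case (1 b) then show ?case by (simp add: is_path_def)
next
  case (2 b x) then show ?case by (simp add: is_path_def)
next
  case (3 b x y p)
  have "is_path b (x # y # p) \<longleftrightarrow> 0 < b x y \<and> is_path b (y # p)"
  proof
    assume H: "is_path b (x # y # p)"
    have l: "Suc 0 < length (x # y # p)" by simp
    have "0 < b ((x # y # p) ! 0) ((x # y # p) ! Suc 0)" using H[unfolded is_path_def] l by blast
    then have "0 < b x y" by simp
    moreover have "is_path b (y # p)"
      unfolding is_path_def
    proof (intro conjI allI impI)
      fix j assume "Suc j < length (y # p)"
      then have "Suc (Suc j) < length (x # y # p)" by simp
      then have "0 < b ((x # y # p) ! Suc j) ((x # y # p) ! Suc (Suc j))" using H[unfolded is_path_def] by blast
      then show "0 < b ((y # p) ! j) ((y # p) ! Suc j)" by simp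
    qed simp
    ultimately show "0 < b x y \<and> is_path b (y # p)" by simp
  next
    assume H: "0 < b x y \<and> is_path b (y # p)"
    show "is_path b (x # y # p)"
      unfolding is_path_def
    proof (intro conjI allI impI)
      fix j assume j: "Suc j < length (x # y # p)"
      show "0 < b ((x # y # p) ! j) ((x # y # p) ! Suc j)"
      proof (cases j)
        case 0 then show ?thesis using H by simp
      next
        case (Suc k)
        then have "Suc k < length (y # p)" using j by simp
        then have "0 < b ((y # p) ! k) ((y # p) ! Suc k)" using H[unfolded is_path_def] by blast
        then show ?thesis using Suc by simp
      qed
    qed simp
  qed
  then show ?case using 3 by simp
qed

lemma path_length_plen: "path_length b p = plen b p"
proof (induction b p rule: plen.induct)
  case (1 b x y p)
  have "path_length b (x # y # p) = (\<Sum>j<Suc (length p). 1 / b ((x # y # p) ! j) ((x # y # p) ! Suc j))"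
    unfolding path_length_def by simp
  also have "\<dots> = 1 / b x y + (\<Sum>j<length p. 1 / b ((y # p) ! j) ((y # p) ! Suc j))"
    by (subst sum.lessThan_Suc_shift) simp
  also have "\<dots> = 1 / b x y + path_length b (y # p)" unfolding path_length_def by simp
  finally show ?case using 1 by simp
next
  case ("2_1" b) then show ?case by (simp add: path_length_def)
next
  case ("2_2" b v) then show ?case by (simp add: path_length_def)
qed

lemma plen_nn: "ipath b p \<Longrightarrow> 0 \<le> plen b p"
  by (induction b p rule: ipath.induct) auto

lemma plen_Cons: "q \<noteq> [] \<Longrightarrow> plen b (x # q) = 1 / b x (hd q) + plen b q"
  by (cases q) auto

lemma ipath_Cons: "q \<noteq> [] \<Longrightarrow> ipath b (x # q) = (0 < b x (hd q) \<and> ipath b q)"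
  by (cases q) auto

lemma ipath_ne: "ipath b p \<Longrightarrow> p \<noteq> []"
  by (cases p) auto

lemma plen_edges: "plen b p = sum_list (map (\<lambda>(u,v). 1 / b u v) (edges p))"
  by (induction b p rule: plen.induct) auto

lemma telescope: "p \<noteq> [] \<Longrightarrow> f (hd p) - f (last p) = sum_list (map (\<lambda>(u,v). f u - f v) (edges p))"
  for f :: "'a \<Rightarrow> real"
proof (induction p rule: edges.induct)
  case (1 x y p)
  have "f y - f (last (y # p)) = sum_list (map (\<lambda>(u,v). f u - f v) (edges (y # p)))" using 1 by simp
  moreover have "last (x # y # p) = last (y # p)" by simp
  ultimately show ?case by simp
qed auto

lemma edges_set: "(u,v) \<in> set (edges p) \<Longrightarrow> u \<in> set p \<and> v \<in> set p"
  by (induction p rule: edges.induct) auto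

lemma edges_pos: "ipath b p \<Longrightarrow> (u,v) \<in> set (edges p) \<Longrightarrow> 0 < b u v"
  by (induction b p rule: ipath.induct) auto

lemma edges_distinct: "distinct p \<Longrightarrow> distinct (edges p)"
  by (induction p rule: edges.induct) (auto dest: edges_set)

lemma edges_antisym: "distinct p \<Longrightarrow> (u,v) \<in> set (edges p) \<Longrightarrow> (v,u) \<notin> set (edges p)"
  by (induction p rule: edges.induct) (auto dest: edges_set)

lemma prefix_path:
  "ipath b p \<Longrightarrow> u \<in> set p \<Longrightarrow> \<exists>q. ipath b q \<and> hd q = hd p \<and> last q = u \<and> plen b q \<le> plen b p"
proof (induction b p rule: ipath.induct)
  case (3 b x y p)
  show ?case
  proof (cases "u = x")
    case True
    then show ?thesis using plen_nn[of b "x # y # p"] 3 by (intro exI[of _ "[x]"]) auto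
  next
    case False
    then have "u \<in> set (y # p)" using 3 by simp
    then obtain q where q: "ipath b q" "hd q = y" "last q = u" "plen b q \<le> plen b (y # p)"
      using 3 by auto
    have qn: "q \<noteq> []" using ipath_ne[OF q(1)] .
    show ?thesis
      using q qn 3(2) by (intro exI[of _ "x # q"]) (auto simp: plen_Cons ipath_Cons)
  qed
qed (auto intro!: exI[of _ "[u]"])

lemma ipath_snoc: "p \<noteq> [] \<Longrightarrow> ipath b (p @ [z]) = (ipath b p \<and> 0 < b (last p) z)"
  by (induction b p rule: ipath.induct) auto

lemma plen_snoc: "p \<noteq> [] \<Longrightarrow> plen b (p @ [z]) = plen b p + 1 / b (last p) z"
  by (induction b p rule: plen.induct) auto

lemma rev_path:
  assumes sym: "\<And>x y. b x y = b y x"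
  shows "ipath b p \<Longrightarrow> ipath b (rev p) \<and> plen b (rev p) = plen b p"
proof (induction p rule: edges.induct)
  case (1 x y p)
  then have IH: "ipath b (rev (y # p))" "plen b (rev (y # p)) = plen b (y # p)" and bxy: "0 < b x y" by auto
  have ne: "rev (y # p) \<noteq> []" by simp
  have l: "last (rev (y # p)) = y" by simp
  have e: "rev (x # y # p) = rev (y # p) @ [x]" by simp
  show ?case
    unfolding e ipath_snoc[OF ne] plen_snoc[OF ne] l using IH bxy sym[of y x] by simp
qed auto

lemma suffix_path:
  "ipath b q \<Longrightarrow> x \<in> set q \<Longrightarrow> \<exists>r. ipath b r \<and> hd r = x \<and> last r = last q \<and> plen b r \<le> plen b q \<and> (distinct q \<longrightarrow> distinct r)"
proof (induction q rule: edges.induct)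
  case (1 z w q)
  show ?case
  proof (cases "z = x")
    case True then show ?thesis using 1 by (intro exI[of _ "z # w # q"]) auto
  next
    case False
    then have "x \<in> set (w # q)" using 1 by simp
    then obtain r where r: "ipath b r" "hd r = x" "last r = last (w # q)" "plen b r \<le> plen b (w # q)"
      "distinct (w # q) \<longrightarrow> distinct r" using 1 by auto
    have "0 < b z w" using 1 by simp
    then have h: "0 \<le> 1 / b z w" by simp
    have "plen b (z # w # q) = 1 / b z w + plen b (w # q)" by simp
    then have "plen b r \<le> plen b (z # w # q)" using r(4) h by linarith
    then show ?thesis using r by (intro exI[of _ r]) auto
  qed
qed (auto intro!: exI[of _ "[x]"])

lemma loopfree_path:
  "ipath b p \<Longrightarrow> \<exists>q. ipath b q \<and> hd q = hd p \<and> last q = last p \<and> distinct q \<and> plen b q \<le> plen b p"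
proof (induction p rule: edges.induct)
  case (1 x y p)
  then obtain q where q: "ipath b q" "hd q = y" "last q = last (y # p)" "distinct q" "plen b q \<le> plen b (y # p)"
    by auto
  have qn: "q \<noteq> []" using ipath_ne[OF q(1)] .
  have bxy: "0 < b x y" using 1 by simp
  show ?case
  proof (cases "x \<in> set q")
    case False
    show ?thesis
      using q qn bxy False by (intro exI[of _ "x # q"]) (auto simp: plen_Cons ipath_Cons)
  next
    case True
    obtain r where r: "ipath b r" "hd r = x" "last r = last q" "plen b r \<le> plen b q" "distinct r"
      using suffix_path[OF q(1) True] q(4) by blast
    have h: "0 \<le> 1 / b x y" using bxy by simp
    have "plen b (x # y # p) = 1 / b x y + plen b (y # p)" by simp
    then have "plen b r \<le> plen b (x # y # p)" using r(4) q(5) h by linarith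
    then show ?thesis using r q by (intro exI[of _ r]) auto
  qed
qed (auto intro!: exI[of _ "[x]" for x])

lemma edge_count:
  assumes "0 < Bm" "\<And>u v. b u v \<le> Bm"
  shows "ipath b p \<Longrightarrow> real (length p - 1) \<le> plen b p * Bm"
proof (induction p rule: edges.induct)
  case (1 x y p)
  then have IH: "real (length p) \<le> plen b (y # p) * Bm" and bxy: "0 < b x y" by auto
  have "1 \<le> 1 / b x y * Bm" using bxy assms(2)[of x y] by (simp add: field_simps)
  then show ?case using IH by (simp add: distrib_right)
qed auto

lemma edge_le_plen:
  "ipath b p \<Longrightarrow> (u,v) \<in> set (edges p) \<Longrightarrow> 1 / b u v \<le> plen b p"
proof (induction p rule: edges.induct)
  case (1 x y p)
  then have bxy: "0 < b x y" and ip: "ipath b (y # p)" by auto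
  have n: "0 \<le> plen b (y # p)" by (rule plen_nn[OF ip])
  show ?case
  proof (cases "(u,v) = (x,y)")
    case True then show ?thesis using n by auto
  next
    case False
    then have "1 / b u v \<le> plen b (y # p)" using 1 by auto
    moreover have "0 \<le> 1 / b x y" using bxy by simp
    moreover have "plen b (x # y # p) = 1 / b x y + plen b (y # p)" by simp
    ultimately show ?thesis by linarith
  qed
qed auto

fun reach :: "('a \<Rightarrow> 'a \<Rightarrow> real) \<Rightarrow> real \<Rightarrow> nat \<Rightarrow> 'a \<Rightarrow> 'a set" where
  "reach b e 0 u = {u}"
| "reach b e (Suc n) u = insert u (\<Union>y\<in>{y. e < b u y}. reach b e n y)"

lemma reach_mono1: "reach b e n u \<subseteq> reach b e (Suc n) u"
proof (induction n arbitrary: u)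
  case (Suc n) then show ?case by auto
qed auto

lemma reach_mono: "n \<le> N \<Longrightarrow> reach b e n u \<subseteq> reach b e N u"
proof (induction N rule: dec_induct)
  case (step k) then show ?case using reach_mono1[of b e k u] by blast
qed simp

lemma path_reach:
  "ipath b p \<Longrightarrow> (\<And>u v. (u,v) \<in> set (edges p) \<Longrightarrow> e < b u v) \<Longrightarrow> set p \<subseteq> reach b e (length p - 1) (hd p)"
proof (induction p rule: edges.induct)
  case (1 x y p)
  then have IH: "set (y # p) \<subseteq> reach b e (length p) y" and bxy: "e < b x y" by auto
  then show ?case by auto
qed auto


lemma l2_sq: "l2_inner m f f = (\<Sum>\<^sub>\<infinity>x. m x * (f x)\<^sup>2)"
  unfolding l2_inner_def by (simp add: power2_eq_square mult.assoc)

lemma sr_l2: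
  assumes "spectral_resolution m H E" "A \<in> sets borel" "in_l2 m f"
  shows "in_l2 m (E A f)"
  using assms unfolding spectral_resolution_def by blast

lemma sr_sa:
  assumes "spectral_resolution m H E" "A \<in> sets borel" "in_l2 m f" "in_l2 m g"
  shows "l2_inner m (E A f) g = l2_inner m f (E A g)"
  using assms unfolding spectral_resolution_def by blast

lemma sr_mult:
  assumes "spectral_resolution m H E" "A \<in> sets borel" "B \<in> sets borel" "in_l2 m f"
  shows "E (A \<inter> B) f = E A (E B f)"
  using assms unfolding spectral_resolution_def by blast

lemma sr_univ:
  assumes "spectral_resolution m H E" "in_l2 m f"
  shows "E UNIV f = f"
  using assms unfolding spectral_resolution_def by blast

lemma sr_mu:
  assumes "spectral_resolution m H E" "in_l2 m f"
  shows "\<exists>\<mu>. finite_measure \<mu> \<and> sets \<mu> = sets borel \<and>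
             (\<forall>A\<in>sets borel. measure \<mu> A = l2_inner m (E A f) f) \<and>
             integrable \<mu> (\<lambda>t. t) \<and>
             l2_inner m (H f) f = (\<integral>t. t \<partial>\<mu>)"
  using assms unfolding spectral_resolution_def by blast

lemma zero_norm:
  assumes mpos: "\<And>x. 0 < m x" and "in_l2 m v" and "l2_inner m v v = 0"
  shows "v = (\<lambda>x. 0)"
proof
  fix x
  have "m x * (v x)\<^sup>2 = 0"
    by (rule nonneg_infsum_le_0D[of "\<lambda>x. m x * (v x)\<^sup>2" UNIV])
      (use assms in \<open>auto simp: l2_sq in_l2_def\<close>, metis less_imp_le mpos mult_nonneg_nonneg zero_le_power2)
  then show "v x = 0" using mpos[of x] by simp
qed

lemma sr_empty:
  assumes sr: "spectral_resolution m H E" and mpos: "\<And>x. 0 < m x" and u: "in_l2 m u"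
  shows "E {} u = (\<lambda>x. 0)"
proof -
  obtain \<mu> where mu: "finite_measure \<mu>" "\<forall>A\<in>sets borel. measure \<mu> A = l2_inner m (E A u) u"
    using sr_mu[OF sr u] by blast
  have e0: "{} \<in> sets borel" by simp
  have v: "in_l2 m (E {} u)" by (rule sr_l2[OF sr e0 u])
  have "l2_inner m (E {} u) u = 0" using mu(2)[rule_format, OF e0] by simp
  moreover have "E {} u = E {} (E {} u)" using sr_mult[OF sr e0 e0 u] by simp
  ultimately have "l2_inner m (E {} (E {} u)) u = 0" by simp
  then have "l2_inner m (E {} u) (E {} u) = 0" using sr_sa[OF sr e0 v u] by simp
  then show ?thesis by (rule zero_norm[OF mpos v])
qed

lemma sr_zero:
  assumes sr: "spectral_resolution m H E" "A \<in> sets borel" "in_l2 m (\<lambda>x. 0)"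
  shows "E A (\<lambda>x. 0) = (\<lambda>x. 0)"
proof -
  have "E A (\<lambda>x. 0 + 1 * 0) = (\<lambda>x. E A (\<lambda>x. 0) x + 1 * E A (\<lambda>x. 0) x)"
    using assms unfolding spectral_resolution_def by blast
  then have "E A (\<lambda>x. 0) = (\<lambda>x. E A (\<lambda>x. 0) x + E A (\<lambda>x. 0) x)" by simp
  then show ?thesis by (metis (no_types) add_cancel_left_left fun_eq_iff)
qed

lemma sr_spec_bound:
  assumes sr: "spectral_resolution m H E" and mpos: "\<And>x. 0 < m x" and f: "in_l2 m f"
    and I: "I \<in> sets borel" and M: "\<forall>y\<in>I. y \<le> M"
  shows "l2_inner m (H (E I f)) (E I f) \<le> M * l2_inner m (E I f) (E I f)"
proof -
  define g where "g = E I f"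
  have g: "in_l2 m g" unfolding g_def by (rule sr_l2[OF sr I f])
  obtain \<mu> where mu: "finite_measure \<mu>" "sets \<mu> = sets borel"
    "\<forall>A\<in>sets borel. measure \<mu> A = l2_inner m (E A g) g" "integrable \<mu> (\<lambda>t. t)"
    "l2_inner m (H g) g = (\<integral>t. t \<partial>\<mu>)"
    using sr_mu[OF sr g] by blast
  interpret finite_measure \<mu> by (rule mu(1))
  have sp: "space \<mu> = UNIV" using sets_eq_imp_space_eq[OF mu(2)] by simp
  have cI: "UNIV - I \<in> sets borel" using borel_comp[OF I] by (simp add: Compl_eq_Diff_UNIV)
  have "E (UNIV - I) g = E ((UNIV - I) \<inter> I) f" unfolding g_def using sr_mult[OF sr cI I f] by simp
  also have "\<dots> = E {} f" by (simp add: Diff_Int_distrib2)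
  also have "\<dots> = (\<lambda>x. 0)" by (rule sr_empty[OF sr mpos f])
  finally have "measure \<mu> (UNIV - I) = 0" using mu(3) cI by (simp add: l2_inner_def)
  then have "emeasure \<mu> (UNIV - I) = 0" by (simp add: emeasure_eq_measure)
  then have nul: "UNIV - I \<in> null_sets \<mu>" using cI mu(2) by auto
  have ae: "AE t in \<mu>. t \<le> M" by (rule AE_I'[OF nul]) (use M in auto)
  have "(\<integral>t. t \<partial>\<mu>) \<le> (\<integral>t. M \<partial>\<mu>)" by (rule integral_mono_AE[OF mu(4) integrable_const ae])
  also have "\<dots> = measure \<mu> UNIV * M" using sp by simp
  also have "measure \<mu> UNIV = l2_inner m g g" using mu(3) sr_univ[OF sr g] by simp
  finally show ?thesis using mu(5) unfolding g_def by (simp add: mult.commute)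
qed


fun cb :: "nat \<Rightarrow> nat \<Rightarrow> nat" where
  "cb B 0 = 1"
| "cb B (Suc n) = Suc (B * cb B n)"

lemma card_insert_le_Suc: "finite A \<Longrightarrow> card (insert x A) \<le> Suc (card A)"
  by (simp add: card_insert_if)

locale WGG = WG b m C for b :: "'a::countable \<Rightarrow> 'a \<Rightarrow> real" and m C +
  fixes D :: "'a set" and Mm R0 :: real
  assumes conn: "graph_connected b" and mM: "\<And>x. m x \<le> Mm" and R0pos: "0 < R0"
    and cover: "(\<Union>p\<in>D. closed_ball b R0 p) = UNIV" and Om: "UNIV - D \<noteq> {}"
begin

definition "Bm = C * Mm + 1"

lemma Mm_pos: "0 < Mm" using mpos[of undefined] mM[of undefined] by simp

lemma b_le_CM: "b x y \<le> C * Mm"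
proof -
  have "b x y \<le> deg x" by (rule b_le_deg)
  also have "\<dots> \<le> C * m x" by (rule degC')
  also have "\<dots> \<le> C * Mm" by (rule mult_left_mono[OF mM C_nn])
  finally show ?thesis .
qed

lemma Bm_pos: "0 < Bm" unfolding Bm_def using C_nn Mm_pos by (simp add: add_nonneg_pos)

lemma b_lt_Bm: "b x y < Bm" using b_le_CM[of x y] unfolding Bm_def by simp

definition "PS x y = {path_length b p | p. is_path b p \<and> hd p = x \<and> last p = y}"

lemma PS_eq: "PS x y = {plen b p | p. ipath b p \<and> hd p = x \<and> last p = y}"
  unfolding PS_def is_path_ipath path_length_plen ..

lemma gdist_PS: "gdist b x y = Inf (PS x y)" unfolding gdist_def PS_def ..

lemma PS_ne: "PS x y \<noteq> {}"
  using conn unfolding graph_connected_def PS_def by blast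

lemma PS_bdd: "bdd_below (PS x y)"
  unfolding PS_eq by (rule bdd_belowI[of _ 0]) (auto intro: plen_nn)

lemma gd_le: "ipath b p \<Longrightarrow> gdist b (hd p) (last p) \<le> plen b p"
  unfolding gdist_PS by (rule cInf_lower[OF _ PS_bdd]) (auto simp: PS_eq)

lemma gd_nn: "0 \<le> gdist b x y"
  unfolding gdist_PS by (rule cInf_greatest[OF PS_ne]) (auto simp: PS_eq intro: plen_nn)

lemma gd_lt: "gdist b x y < r \<Longrightarrow> \<exists>p. ipath b p \<and> hd p = x \<and> last p = y \<and> plen b p < r"
  unfolding gdist_PS using cInf_lessD[OF PS_ne] unfolding PS_eq by blast

lemma gd_sym_le: "gdist b y x \<le> gdist b x y"
  unfolding gdist_PS[of x y]
proof (rule cInf_greatest[OF PS_ne])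
  fix l assume "l \<in> PS x y"
  then obtain p where p: "ipath b p" "hd p = x" "last p = y" "l = plen b p" unfolding PS_eq by blast
  have r: "ipath b (rev p)" "plen b (rev p) = plen b p" using rev_path[OF sym p(1)] by auto
  have ne: "p \<noteq> []" using ipath_ne[OF p(1)] .
  have "gdist b (hd (rev p)) (last (rev p)) \<le> plen b (rev p)" by (rule gd_le[OF r(1)])
  then show "gdist b y x \<le> l" using p r ne by (simp add: hd_rev last_rev)
qed

lemma gd_sym: "gdist b y x = gdist b x y"
  using gd_sym_le[of x y] gd_sym_le[of y x] by simp

lemma nbr_fin:
  assumes e: "0 < e"
  shows "finite {y. e < b u y}" and "real (card {y. e < b u y}) * e \<le> deg u"
proof -
  have fin_bound: "real (card F) * e \<le> deg u" if F: "finite F" "F \<subseteq> {y. e < b u y}" for F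
  proof -
    have "real (card F) * e \<le> sum (b u) F"
      by (rule sum_bounded_below) (use F in auto)
    also have "\<dots> \<le> infsum (b u) UNIV"
      by (rule finite_sum_le_infsum) (use F bsum bnn in auto)
    finally show ?thesis unfolding deg_def by simp
  qed
  show fin: "finite {y. e < b u y}"
  proof (rule ccontr)
    assume inf: "infinite {y. e < b u y}"
    define n where "n = nat \<lceil>deg u / e\<rceil> + 1"
    obtain F where F: "finite F" "card F = n" "F \<subseteq> {y. e < b u y}"
      using infinite_arbitrarily_large[OF inf] by blast
    have "real n * e \<le> deg u" using fin_bound[OF F(1) F(3)] F(2) by simp
    moreover have "deg u / e < real n" unfolding n_def by linarith
    then have "deg u < real n * e" using e by (simp add: divide_less_eq)
    ultimately show False by simp
  qed
  show "real (card {y. e < b u y}) * e \<le> deg u" by (rule fin_bound[OF fin]) simp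
qed

definition "Bn e = nat \<lceil>Bm / e\<rceil>"

lemma nbr_card: "0 < e \<Longrightarrow> card {y. e < b u y} \<le> Bn e"
proof -
  assume e: "0 < e"
  have "real (card {y. e < b u y}) * e \<le> deg u" by (rule nbr_fin(2)[OF e])
  also have "\<dots> \<le> C * m u" by (rule degC')
  also have "\<dots> \<le> C * Mm" by (rule mult_left_mono[OF mM C_nn])
  also have "\<dots> \<le> Bm" unfolding Bm_def by simp
  finally have "real (card {y. e < b u y}) \<le> Bm / e" using e by (simp add: le_divide_eq)
  then show ?thesis unfolding Bn_def by linarith
qed

lemma reach_card: "0 < e \<Longrightarrow> finite (reach b e n u) \<and> card (reach b e n u) \<le> cb (Bn e) n"
proof (induction n arbitrary: u)
  case 0 then show ?case by simp
next
  case (Suc n)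
  let ?N = "{y. e < b u y}"
  have fN: "finite ?N" by (rule nbr_fin(1)[OF Suc.prems])
  have fU: "finite (\<Union>y\<in>?N. reach b e n y)" using fN Suc by auto
  have "card (\<Union>y\<in>?N. reach b e n y) \<le> (\<Sum>y\<in>?N. card (reach b e n y))" by (rule card_UN_le[OF fN])
  also have "\<dots> \<le> card ?N * cb (Bn e) n" using sum_bounded_above[of ?N "\<lambda>y. card (reach b e n y)" "cb (Bn e) n"] Suc by auto
  also have "\<dots> \<le> Bn e * cb (Bn e) n" using nbr_card[OF Suc.prems] by simp
  finally have c: "card (\<Union>y\<in>?N. reach b e n y) \<le> Bn e * cb (Bn e) n" .
  have "card (reach b e (Suc n) u) \<le> Suc (card (\<Union>y\<in>?N. reach b e n y))"
    using card_insert_le_Suc[OF fU] by simp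
  then show ?case using fU c by simp
qed

definition "NN r = nat \<lceil>(r + 1) * Bm\<rceil>"

lemma path_small:
  assumes r: "0 \<le> r" and p: "ipath b p" "plen b p < r + 1"
  shows "set p \<subseteq> reach b (1 / (r + 1)) (NN r) (hd p)" and "length p - 1 \<le> NN r"
proof -
  have ed: "1 / (r + 1) < b v w" if "(v,w) \<in> set (edges p)" for v w
  proof -
    have bp: "0 < b v w" by (rule edges_pos[OF p(1) that])
    have "1 / b v w < r + 1" using edge_le_plen[OF p(1) that] p(2) by simp
    then show ?thesis using bp r by (simp add: field_simps)
  qed
  have "real (length p - 1) \<le> plen b p * Bm" by (rule edge_count[OF Bm_pos less_imp_le[OF b_lt_Bm] p(1)])
  also have "\<dots> \<le> (r + 1) * Bm" using p(2) Bm_pos by simp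
  finally show l: "length p - 1 \<le> NN r" unfolding NN_def by linarith
  then have rm: "reach b (1 / (r + 1)) (length p - 1) (hd p) \<subseteq> reach b (1 / (r + 1)) (NN r) (hd p)"
    by (rule reach_mono)
  have "set p \<subseteq> reach b (1 / (r + 1)) (length p - 1) (hd p)" by (rule path_reach[OF p(1) ed])
  then show "set p \<subseteq> reach b (1 / (r + 1)) (NN r) (hd p)" using rm by simp
qed

lemma ball_reach:
  assumes r: "0 \<le> r"
  shows "closed_ball b r u \<subseteq> reach b (1 / (r + 1)) (NN r) u"
proof
  fix y assume "y \<in> closed_ball b r u"
  then have "gdist b u y < r + 1" unfolding closed_ball_def by simp
  then obtain p where p: "ipath b p" "hd p = u" "last p = y" "plen b p < r + 1" using gd_lt by blast
  have ed: "1 / (r + 1) < b v w" if "(v,w) \<in> set (edges p)" for v w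
  proof -
    have bp: "0 < b v w" by (rule edges_pos[OF p(1) that])
    have "1 / b v w < r + 1" using edge_le_plen[OF p(1) that] p(4) by simp
    then show ?thesis using bp r by (simp add: field_simps)
  qed
  have "real (length p - 1) \<le> plen b p * Bm" by (rule edge_count[OF Bm_pos less_imp_le[OF b_lt_Bm] p(1)])
  also have "\<dots> \<le> (r + 1) * Bm" using p(4) Bm_pos by simp
  finally have "length p - 1 \<le> NN r" unfolding NN_def by linarith
  then have rm: "reach b (1 / (r + 1)) (length p - 1) (hd p) \<subseteq> reach b (1 / (r + 1)) (NN r) (hd p)"
    by (rule reach_mono)
  have "set p \<subseteq> reach b (1 / (r + 1)) (length p - 1) (hd p)" by (rule path_reach[OF p(1) ed])
  then have "set p \<subseteq> reach b (1 / (r + 1)) (NN r) u" using rm p(2) by simp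
  moreover have "y \<in> set p" using p(3) ipath_ne[OF p(1)] by auto
  ultimately show "y \<in> reach b (1 / (r + 1)) (NN r) u" by blast
qed

lemma ball_finite: "0 \<le> r \<Longrightarrow> finite (closed_ball b r u)"
  using ball_reach reach_card[of "1 / (r + 1)"] by (meson divide_pos_pos finite_subset zero_less_one add_nonneg_pos)

lemma vol_ball_le: "0 \<le> r \<Longrightarrow> vol m (closed_ball b r u) \<le> real (cb (Bn (1 / (r + 1))) (NN r)) * Mm"
proof -
  assume r: "0 \<le> r"
  have e: "0 < 1 / (r + 1)" using r by simp
  have fin: "finite (closed_ball b r u)" by (rule ball_finite[OF r])
  have "vol m (closed_ball b r u) = sum m (closed_ball b r u)" unfolding vol_def using fin by simp
  also have "\<dots> \<le> real (card (closed_ball b r u)) * Mm" by (rule sum_bounded_above) (use mM in auto)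
  also have "\<dots> \<le> real (cb (Bn (1 / (r + 1))) (NN r)) * Mm"
  proof -
    have "card (closed_ball b r u) \<le> card (reach b (1 / (r + 1)) (NN r) u)"
      by (rule card_mono) (use reach_card[OF e] ball_reach[OF r] in auto)
    also have "\<dots> \<le> cb (Bn (1 / (r + 1))) (NN r)" using reach_card[OF e] by blast
    finally show ?thesis using Mm_pos by (intro mult_right_mono) auto
  qed
  finally show ?thesis .
qed

lemma vol_bdd: "0 \<le> r \<Longrightarrow> bdd_above (range (\<lambda>x. vol m (closed_ball b r x)))"
  using vol_ball_le by (intro bdd_aboveI2) blast


definition "Rin = inradius b (UNIV - D)"
definition "Sset = {r. r > 0 \<and> (\<exists>x\<in>UNIV - D. open_ball b r x \<subseteq> UNIV - D)}"

lemma Rin_Sup: "Rin = Sup Sset" unfolding Rin_def inradius_def Sset_def ..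

lemma S_small: "1 / Bm \<in> Sset"
proof -
  obtain x0 where x0: "x0 \<in> UNIV - D" using Om by blast
  have "open_ball b (1 / Bm) x0 \<subseteq> UNIV - D"
  proof
    fix y assume "y \<in> open_ball b (1 / Bm) x0"
    then have "gdist b x0 y < 1 / Bm" unfolding open_ball_def by simp
    then obtain p where p: "ipath b p" "hd p = x0" "last p = y" "plen b p < 1 / Bm" using gd_lt by blast
    have "y = x0"
    proof (cases p rule: edges.cases)
      case (1 z w q)
      then have e: "(z,w) \<in> set (edges p)" by simp
      have bp: "0 < b z w" by (rule edges_pos[OF p(1) e])
      have "1 / b z w \<le> plen b p" by (rule edge_le_plen[OF p(1) e])
      moreover have "1 / Bm < 1 / b z w" using bp b_lt_Bm[of z w] by (simp add: frac_less2)
      ultimately show ?thesis using p(4) by simp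
    qed (use p in auto)
    then show "y \<in> UNIV - D" using x0 by simp
  qed
  then show ?thesis unfolding Sset_def using x0 Bm_pos by auto
qed

lemma S_bdd: "bdd_above Sset"
proof (rule bdd_aboveI[of _ R0])
  fix r assume "r \<in> Sset"
  then obtain x where r: "r > 0" "x \<in> UNIV - D" "open_ball b r x \<subseteq> UNIV - D" unfolding Sset_def by blast
  obtain p where p: "p \<in> D" "x \<in> closed_ball b R0 p" using cover by blast
  have "gdist b x p \<le> R0" using p(2) gd_sym[of x p] unfolding closed_ball_def by simp
  show "r \<le> R0"
  proof (rule ccontr)
    assume "\<not> r \<le> R0"
    then have "p \<in> open_ball b r x" using \<open>gdist b x p \<le> R0\<close> unfolding open_ball_def by simp
    then show False using r(3) p(1) by blast
  qed
qed

lemma Rin_ge: "1 / Bm \<le> Rin" unfolding Rin_Sup by (rule cSup_upper[OF S_small S_bdd])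

lemma Rin_pos: "0 < Rin" using Rin_ge Bm_pos by (smt (verit) divide_pos_pos)

lemma escape:
  assumes "x \<notin> D" "Rin < r"
  shows "\<exists>p. ipath b p \<and> hd p = x \<and> last p \<in> D \<and> plen b p < r"
proof -
  have "r \<notin> Sset" using assms(2) cSup_upper[OF _ S_bdd] unfolding Rin_Sup by force
  moreover have "r > 0" using assms(2) Rin_pos by simp
  ultimately have "\<not> open_ball b r x \<subseteq> UNIV - D" using assms(1) unfolding Sset_def by blast
  then obtain y where y: "gdist b x y < r" "y \<in> D" unfolding open_ball_def by blast
  then show ?thesis using gd_lt[OF y(1)] by blast
qed

lemma gamma_ex: "\<exists>p. ipath b p \<and> hd p = x \<and> last p \<in> D \<and> distinct p \<and> plen b p \<le> Rin"
proof (cases "x \<in> D")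
  case True then show ?thesis using Rin_pos by (intro exI[of _ "[x]"]) auto
next
  case False
  define PX where "PX = {p. ipath b p \<and> hd p = x \<and> last p \<in> D \<and> plen b p < Rin + 1}"
  have R0': "0 \<le> Rin" using Rin_pos by simp
  have "PX \<subseteq> {xs. set xs \<subseteq> reach b (1 / (Rin + 1)) (NN Rin) x \<and> length xs \<le> Suc (NN Rin)}"
  proof
    fix p assume "p \<in> PX"
    then have p: "ipath b p" "hd p = x" "plen b p < Rin + 1" unfolding PX_def by auto
    show "p \<in> {xs. set xs \<subseteq> reach b (1 / (Rin + 1)) (NN Rin) x \<and> length xs \<le> Suc (NN Rin)}"
      using path_small[OF R0' p(1) p(3)] p(2) by auto
  qed
  moreover have "finite {xs. set xs \<subseteq> reach b (1 / (Rin + 1)) (NN Rin) x \<and> length xs \<le> Suc (NN Rin)}"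
    by (rule finite_lists_length_le) (use reach_card[of "1 / (Rin + 1)"] R0' in auto)
  ultimately have fin: "finite PX" by (rule finite_subset)
  obtain p1 where "ipath b p1 \<and> hd p1 = x \<and> last p1 \<in> D \<and> plen b p1 < Rin + 1/2"
    using escape[OF False, of "Rin + 1/2"] by auto
  then have ne: "PX \<noteq> {}" unfolding PX_def by force
  define L where "L = plen b ` PX"
  have finL: "finite L" and neL: "L \<noteq> {}" using fin ne unfolding L_def by auto
  obtain p0 where p0: "p0 \<in> PX" "plen b p0 = Min L" using Min_in[OF finL neL] unfolding L_def by auto
  have "plen b p0 \<le> Rin"
  proof (rule ccontr)
    assume "\<not> plen b p0 \<le> Rin"
    then obtain p2 where p2: "ipath b p2" "hd p2 = x" "last p2 \<in> D" "plen b p2 < plen b p0"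
      using escape[OF False, of "plen b p0"] by auto
    have "plen b p0 < Rin + 1" using p0(1) unfolding PX_def by simp
    then have "p2 \<in> PX" using p2 unfolding PX_def by simp
    then have "Min L \<le> plen b p2" using finL unfolding L_def by simp
    then show False using p2(4) p0(2) by simp
  qed
  moreover obtain q where q: "ipath b q" "hd q = hd p0" "last q = last p0" "distinct q" "plen b q \<le> plen b p0"
    using loopfree_path[of b p0] p0(1) unfolding PX_def by blast
  ultimately show ?thesis using p0(1) unfolding PX_def by (intro exI[of _ q]) auto
qed


definition "gam x = (SOME p. ipath b p \<and> hd p = x \<and> last p \<in> D \<and> distinct p \<and> plen b p \<le> Rin)"

lemma gam: "ipath b (gam x) \<and> hd (gam x) = x \<and> last (gam x) \<in> D \<and> distinct (gam x) \<and> plen b (gam x) \<le> Rin"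
  unfolding gam_def by (rule someI_ex[OF gamma_ex])

definition "E x = set (edges (gam x))"

lemma E_fin: "finite (E x)" unfolding E_def by simp

lemma E_pos: "(u,v) \<in> E x \<Longrightarrow> 0 < b u v"
  unfolding E_def using edges_pos[of b "gam x"] gam[of x] by blast

lemma E_anti: "(u,v) \<in> E x \<Longrightarrow> (v,u) \<notin> E x"
  unfolding E_def using edges_antisym[of "gam x"] gam[of x] by blast

lemma on_gam_ball: "u \<in> set (gam x) \<Longrightarrow> x \<in> closed_ball b Rin u"
proof -
  assume u: "u \<in> set (gam x)"
  obtain q where q: "ipath b q" "hd q = x" "last q = u" "plen b q \<le> plen b (gam x)"
    using prefix_path[OF conjunct1[OF gam] u] gam[of x] by auto
  have "gdist b x u \<le> plen b q" using gd_le[OF q(1)] q(2,3) by simp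
  then have "gdist b u x \<le> Rin" using q(4) gam[of x] gd_sym[of u x] by simp
  then show ?thesis unfolding closed_ball_def by simp
qed

lemma E_ball: "(u,v) \<in> E x \<Longrightarrow> x \<in> closed_ball b Rin u \<and> x \<in> closed_ball b Rin v"
  unfolding E_def using edges_set[of u v "gam x"] on_gam_ball[of u x] on_gam_ball[of v x] by blast

lemma dist_E: "distinct (edges (gam x))" using edges_distinct gam[of x] by blast

lemma plen_E: "plen b (gam x) = (\<Sum>(u,v)\<in>E x. 1 / b u v)"
  unfolding E_def plen_edges by (rule sum_list_distinct_conv_sum_set[OF dist_E])

lemma tele_E: "f x - f (last (gam x)) = (\<Sum>(u,v)\<in>E x. f u - f v)" for f :: "'a \<Rightarrow> real"
proof -
  have "f (hd (gam x)) - f (last (gam x)) = sum_list (map (\<lambda>(u,v). f u - f v) (edges (gam x)))"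
    by (rule telescope) (use gam[of x] ipath_ne in blast)
  then show ?thesis unfolding E_def using gam[of x]
    by (simp add: sum_list_distinct_conv_sum_set[OF dist_E])
qed

definition "Gf f e = (case e of (u,v) \<Rightarrow> b u v * (f u - f v)\<^sup>2)"

lemma Gf_nn: "0 \<le> Gf f e" unfolding Gf_def by (auto simp: bnn split: prod.splits)

lemma pointwise_hardy:
  assumes "\<forall>y\<in>D. f y = 0"
  shows "(f x)\<^sup>2 \<le> Rin * (\<Sum>e\<in>E x. Gf f e)"
proof -
  have fl: "f (last (gam x)) = 0" using assms gam[of x] by blast
  have "f x = (\<Sum>e\<in>E x. sqrt (1 / b (fst e) (snd e)) * (sqrt (b (fst e) (snd e)) * (f (fst e) - f (snd e))))"
  proof -
    have "f x = (\<Sum>(u,v)\<in>E x. f u - f v)" using tele_E[of f x] fl by simp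
    also have "\<dots> = (\<Sum>e\<in>E x. sqrt (1 / b (fst e) (snd e)) * (sqrt (b (fst e) (snd e)) * (f (fst e) - f (snd e))))"
    proof (rule sum.cong)
      fix e assume e: "e \<in> E x"
      obtain u v where uv: "e = (u,v)" by fastforce
      have bp: "0 < b u v" using E_pos e uv by blast
      have "sqrt (1 / b u v) * sqrt (b u v) = 1" using bp by (simp add: real_sqrt_divide)
      then show "(case e of (u,v) \<Rightarrow> f u - f v) = sqrt (1 / b (fst e) (snd e)) * (sqrt (b (fst e) (snd e)) * (f (fst e) - f (snd e)))"
        unfolding uv by (simp add: mult.assoc[symmetric])
    qed simp
    finally show ?thesis .
  qed
  then have "(f x)\<^sup>2 \<le> (\<Sum>e\<in>E x. (sqrt (1 / b (fst e) (snd e)))\<^sup>2) * (\<Sum>e\<in>E x. (sqrt (b (fst e) (snd e)) * (f (fst e) - f (snd e)))\<^sup>2)"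
    using Cauchy_Schwarz_ineq_sum by simp
  also have "(\<Sum>e\<in>E x. (sqrt (1 / b (fst e) (snd e)))\<^sup>2) = plen b (gam x)"
    unfolding plen_E using E_pos by (intro sum.cong) (auto simp: less_imp_le)
  also have "(\<Sum>e\<in>E x. (sqrt (b (fst e) (snd e)) * (f (fst e) - f (snd e)))\<^sup>2) = (\<Sum>e\<in>E x. Gf f e)"
    unfolding Gf_def using E_pos by (intro sum.cong) (auto simp: power_mult_distrib less_imp_le)
  also have "plen b (gam x) * (\<Sum>e\<in>E x. Gf f e) \<le> Rin * (\<Sum>e\<in>E x. Gf f e)"
    using gam[of x] Gf_nn by (intro mult_right_mono sum_nonneg) auto
  finally show ?thesis .
qed

definition "ind e x = (if e \<in> E x then 1 else 0 :: real)"
definition "w e = (\<Sum>\<^sub>\<infinity>x. m x * ind e x)"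
definition "V = vol_sup b m Rin"

lemma w_summ: "(\<lambda>x. m x * ind e x) summable_on UNIV"
proof (rule finite_nonzero_values_imp_summable_on)
  obtain u v where e: "e = (u,v)" by fastforce
  have "{x \<in> UNIV. m x * ind e x \<noteq> 0} \<subseteq> closed_ball b Rin u"
    unfolding ind_def e using E_ball by auto
  then show "finite {x \<in> UNIV. m x * ind e x \<noteq> 0}"
    using ball_finite[of Rin u] Rin_pos by (meson finite_subset less_imp_le)
qed

lemma V_ge: "vol m (closed_ball b Rin u) \<le> V"
  unfolding V_def vol_sup_def by (rule cSUP_upper) (use vol_bdd Rin_pos in auto)

lemma w_nn: "0 \<le> w e" unfolding w_def ind_def by (rule infsum_nonneg) (use mpos in \<open>auto simp: less_imp_le\<close>)

lemma w_pair: "w (u,v) + w (v,u) \<le> V"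
proof -
  have sb: "(\<lambda>x. m x * indicator (closed_ball b Rin u) x) summable_on UNIV"
    by (rule finite_nonzero_values_imp_summable_on)
      (use ball_finite[of Rin u] Rin_pos in \<open>auto intro: finite_subset[of _ "closed_ball b Rin u"] simp: indicator_def\<close>)
  have "w (u,v) + w (v,u) = (\<Sum>\<^sub>\<infinity>x. m x * ind (u,v) x + m x * ind (v,u) x)"
    unfolding w_def by (rule infsum_add[symmetric, OF w_summ w_summ])
  also have "\<dots> \<le> (\<Sum>\<^sub>\<infinity>x. m x * indicator (closed_ball b Rin u) x)"
  proof (rule infsum_mono[OF summable_on_add[OF w_summ w_summ] sb])
    fix x
    have "ind (u,v) x + ind (v,u) x \<le> indicator (closed_ball b Rin u) x"
      unfolding ind_def using E_anti[of u v x] E_anti[of v u x] E_ball[of u v x] E_ball[of v u x]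
      by (auto simp: indicator_def)
    then show "m x * ind (u,v) x + m x * ind (v,u) x \<le> m x * indicator (closed_ball b Rin u) x"
      using mpos[of x] by (simp add: distrib_left[symmetric])
  qed
  also have "\<dots> = vol m (closed_ball b Rin u)"
    unfolding vol_def by (rule infsum_cong_neutral) (auto simp: indicator_def)
  also have "\<dots> \<le> V" by (rule V_ge)
  finally show ?thesis .
qed

lemma w_le: "w e \<le> V"
proof -
  obtain u v where e: "e = (u,v)" by fastforce
  show ?thesis using w_pair[of u v] w_nn[of "(v,u)"] unfolding e by simp
qed


lemma Gf_summable: "in_l2 m f \<Longrightarrow> Gf f summable_on UNIV"
  using pairsq_summable unfolding Gf_def case_prod_unfold by simp

lemma Gf_Q: "(\<Sum>\<^sub>\<infinity>e. Gf f e) = 2 * Q f"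
  unfolding Gf_def Q_def case_prod_unfold by simp

lemma Gf_sym: "Gf f (v,u) = Gf f (u,v)"
  unfolding Gf_def by (simp add: sym[of v u] power2_commute)

theorem hardy:
  assumes f: "in_l2 m f" and fD: "\<forall>y\<in>D. f y = 0"
  shows "(\<Sum>\<^sub>\<infinity>x. m x * (f x)\<^sup>2) \<le> Rin * V * Q f"
proof -
  define H where "H e x = Gf f e * (m x * ind e x)" for e x
  have V0: "0 \<le> V" using w_nn w_le order_trans by blast
  have Gs: "Gf f summable_on UNIV" by (rule Gf_summable[OF f])
  have Gw_s: "(\<lambda>e. Gf f e * w e) summable_on UNIV"
  proof (rule sum_dom)
    show "(\<lambda>e. V * Gf f e) summable_on UNIV" using Gs by (rule summable_on_cmult_right)
    fix e show "\<bar>Gf f e * w e\<bar> \<le> V * Gf f e"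
      using Gf_nn[of f e] w_nn[of e] w_le[of e] by (simp add: abs_mult mult.commute mult_left_mono)
  qed
  have Hs: "(\<lambda>(e,x). H e x) summable_on (UNIV \<times> UNIV)"
  proof -
    have "(\<lambda>(e,x). H e x) summable_on Sigma UNIV (\<lambda>_. UNIV)"
    proof (rule summable_on_SigmaI[where g="\<lambda>e. Gf f e * w e"])
      fix e :: "'a \<times> 'a"
      show "((\<lambda>x. case (e, x) of (e, x) \<Rightarrow> H e x) has_sum Gf f e * w e) UNIV"
        unfolding H_def w_def using has_sum_cmult_right[OF has_sum_infsum[OF w_summ[of e]], of "Gf f e"]
        by simp
    next
      show "(\<lambda>e. Gf f e * w e) summable_on UNIV" by (rule Gw_s)
    next
      fix e x show "0 \<le> (case (e, x) of (e, x) \<Rightarrow> H e x)"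
        unfolding H_def ind_def using Gf_nn[of f e] mpos[of x] by simp
    qed
    then show ?thesis by simp
  qed
  have swap: "(\<Sum>\<^sub>\<infinity>e. \<Sum>\<^sub>\<infinity>x. H e x) = (\<Sum>\<^sub>\<infinity>x. \<Sum>\<^sub>\<infinity>e. H e x)"
    by (rule infsum_swap_banach[OF Hs])
  have inner_x: "(\<Sum>\<^sub>\<infinity>x. H e x) = Gf f e * w e" for e
    unfolding H_def w_def by (rule cmr[OF w_summ])
  have inner_e: "(\<Sum>\<^sub>\<infinity>e. H e x) = m x * (\<Sum>e\<in>E x. Gf f e)" for x
  proof -
    have "(\<Sum>\<^sub>\<infinity>e. H e x) = (\<Sum>\<^sub>\<infinity>e\<in>E x. H e x)"
      by (rule infsum_cong_neutral) (auto simp: H_def ind_def)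
    also have "\<dots> = (\<Sum>e\<in>E x. m x * Gf f e)" using E_fin[of x] by (simp add: H_def ind_def mult.commute)
    also have "\<dots> = m x * (\<Sum>e\<in>E x. Gf f e)" by (simp add: sum_distrib_left)
    finally show ?thesis .
  qed
  have Hs': "(\<lambda>(x,e). H e x) summable_on UNIV"
  proof -
    have "(\<lambda>(x,e). (\<lambda>(e,x). H e x) (e,x)) summable_on (UNIV \<times> UNIV)"
      using Hs summable_on_swap by blast
    then show ?thesis by simp
  qed
  have mS_s: "(\<lambda>x. m x * (\<Sum>e\<in>E x. Gf f e)) summable_on UNIV"
    using pair_fub(2)[OF Hs'] inner_e by simp
  have step1: "(\<Sum>\<^sub>\<infinity>x. m x * (f x)\<^sup>2) \<le> (\<Sum>\<^sub>\<infinity>x. Rin * (m x * (\<Sum>e\<in>E x. Gf f e)))"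
  proof (rule infsum_mono)
    show "(\<lambda>x. m x * (f x)\<^sup>2) summable_on UNIV" using f unfolding in_l2_def .
    show "(\<lambda>x. Rin * (m x * (\<Sum>e\<in>E x. Gf f e))) summable_on UNIV" using mS_s by (rule summable_on_cmult_right)
    fix x
    have "m x * (f x)\<^sup>2 \<le> m x * (Rin * (\<Sum>e\<in>E x. Gf f e))"
      using pointwise_hardy[OF fD, of x] mpos[of x] by (intro mult_left_mono) auto
    then show "m x * (f x)\<^sup>2 \<le> Rin * (m x * (\<Sum>e\<in>E x. Gf f e))" by (simp add: algebra_simps)
  qed
  also have "\<dots> = Rin * (\<Sum>\<^sub>\<infinity>x. m x * (\<Sum>e\<in>E x. Gf f e))" by (rule cmr[OF mS_s])
  also have "(\<Sum>\<^sub>\<infinity>x. m x * (\<Sum>e\<in>E x. Gf f e)) = (\<Sum>\<^sub>\<infinity>e. Gf f e * w e)"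
    using swap inner_x inner_e by simp
  finally have A: "(\<Sum>\<^sub>\<infinity>x. m x * (f x)\<^sup>2) \<le> Rin * (\<Sum>\<^sub>\<infinity>e. Gf f e * w e)" .
  have Gws_s: "(\<lambda>e. Gf f e * w (prod.swap e)) summable_on UNIV"
  proof (rule sum_dom)
    show "(\<lambda>e. V * Gf f e) summable_on UNIV" using Gs by (rule summable_on_cmult_right)
    fix e show "\<bar>Gf f e * w (prod.swap e)\<bar> \<le> V * Gf f e"
      using Gf_nn[of f e] w_nn[of "prod.swap e"] w_le[of "prod.swap e"] by (simp add: abs_mult mult.commute mult_left_mono)
  qed
  have B: "(\<Sum>\<^sub>\<infinity>e. Gf f e * w e) = (\<Sum>\<^sub>\<infinity>e. Gf f e * w (prod.swap e))"
  proof -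
    have "(\<Sum>\<^sub>\<infinity>(u,v). Gf f (v,u) * w (v,u)) = (\<Sum>\<^sub>\<infinity>(u,v). Gf f (u,v) * w (u,v))"
      by (rule pair_swap_infsum[of "\<lambda>u v. Gf f (u,v) * w (u,v)"])
    then have "(\<Sum>\<^sub>\<infinity>p. Gf f p * w (snd p, fst p)) = (\<Sum>\<^sub>\<infinity>p. Gf f p * w p)"
      unfolding Gf_sym by (simp add: case_prod_unfold)
    then show ?thesis unfolding prod.swap_def by simp
  qed
  have "2 * (\<Sum>\<^sub>\<infinity>e. Gf f e * w e) = (\<Sum>\<^sub>\<infinity>e. Gf f e * w e + Gf f e * w (prod.swap e))"
    using B infsum_add[OF Gw_s Gws_s] by simp
  also have "\<dots> \<le> (\<Sum>\<^sub>\<infinity>e. V * Gf f e)"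
  proof (rule infsum_mono[OF summable_on_add[OF Gw_s Gws_s] summable_on_cmult_right[OF Gs]])
    fix e :: "'a \<times> 'a"
    obtain u v where e: "e = (u,v)" by fastforce
    have "w e + w (prod.swap e) \<le> V" using w_pair[of u v] unfolding e by simp
    then have "Gf f e * (w e + w (prod.swap e)) \<le> Gf f e * V" using Gf_nn by (rule mult_left_mono)
    then show "Gf f e * w e + Gf f e * w (prod.swap e) \<le> V * Gf f e" by (simp add: algebra_simps)
  qed
  also have "\<dots> = V * (2 * Q f)" using cmr[OF Gs] Gf_Q by simp
  finally have C: "(\<Sum>\<^sub>\<infinity>e. Gf f e * w e) \<le> V * Q f" by simp
  have "Rin * (\<Sum>\<^sub>\<infinity>e. Gf f e * w e) \<le> Rin * (V * Q f)" using C Rin_pos by (intro mult_left_mono) auto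
  then show ?thesis using A by (simp add: mult.assoc)
qed

end

lemma final_arith:
  fixes lam M G X Cp :: real
  assumes M0: "0 \<le> M" and Mlt: "M < lam" and lC: "lam \<le> 2 * Cp" and X0: "0 \<le> X"
    and key: "lam * (G - X) \<le> (1 + (lam - M) / (2 * lam)) * M * G + (1 + 1 / ((lam - M) / (2 * lam))) * (2 * Cp * X)"
    and G0: "0 \<le> G"
  shows "(lam - M)\<^sup>2 / (16 * (Cp + 1) ^ 4) * G \<le> X"
proof -
  define a where "a = lam - M"
  have a0: "0 < a" using Mlt unfolding a_def by simp
  have l0: "0 < lam" using M0 Mlt by simp
  have C0: "0 < Cp" using l0 lC by simp
  have al: "a \<le> lam" using M0 unfolding a_def by simp
  have t1: "(1 + a / (2 * lam)) * M * G \<le> (M + a / 2) * G"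
  proof -
    have "a / (2 * lam) * M \<le> a / 2"
    proof -
      have "a / (2 * lam) * M \<le> a / (2 * lam) * lam" using a0 l0 Mlt by (intro mult_left_mono) auto
      also have "\<dots> = a / 2" using l0 by simp
      finally show ?thesis .
    qed
    then have "(1 + a / (2 * lam)) * M \<le> M + a / 2" by (simp add: distrib_right)
    then show ?thesis using G0 by (rule mult_right_mono)
  qed
  have t2: "1 + 1 / (a / (2 * lam)) = 1 + 2 * lam / a" using a0 l0 by simp
  have key': "lam * (G - X) \<le> (1 + a / (2 * lam)) * M * G + (1 + 2 * lam / a) * (2 * Cp * X)"
    using key unfolding a_def[symmetric] t2 .
  then have "lam * (G - X) \<le> (M + a / 2) * G + (1 + 2 * lam / a) * (2 * Cp * X)"
    using t1 by linarith
  then have h: "lam * G - lam * X \<le> M * G + (a * G) / 2 + (1 + 2 * lam / a) * (2 * Cp * X)"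
    by (simp add: algebra_simps)
  have e1: "lam * G = M * G + a * G" unfolding a_def by (simp add: algebra_simps)
  have e2: "(lam + (1 + 2 * lam / a) * (2 * Cp)) * X = lam * X + (1 + 2 * lam / a) * (2 * Cp * X)"
    by (simp add: algebra_simps)
  have "(a * G) / 2 \<le> lam * X + (1 + 2 * lam / a) * (2 * Cp * X)" using h e1 by linarith
  then have "(a / 2) * G \<le> (lam + (1 + 2 * lam / a) * (2 * Cp)) * X" unfolding e2 by simp
  then have "a * ((a / 2) * G) \<le> a * ((lam + (1 + 2 * lam / a) * (2 * Cp)) * X)"
    using a0 by (intro mult_left_mono) auto
  also have "a * ((lam + (1 + 2 * lam / a) * (2 * Cp)) * X) = (a * lam + 2 * Cp * a + 4 * Cp * lam) * X"
    using a0 by (simp add: field_simps)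
  also have "\<dots> \<le> (lam * lam + 2 * Cp * lam + 4 * Cp * lam) * X"
  proof -
    have "a * lam + 2 * Cp * a \<le> lam * lam + 2 * Cp * lam"
      using al l0 C0 by (intro add_mono mult_right_mono mult_left_mono) auto
    then show ?thesis using X0 by (intro mult_right_mono) auto
  qed
  also have "\<dots> \<le> (16 * Cp\<^sup>2) * X"
  proof -
    have "lam * lam \<le> (2 * Cp) * (2 * Cp)" using l0 lC by (intro mult_mono) auto
    moreover have "2 * Cp * lam \<le> 2 * Cp * (2 * Cp)" using C0 lC by (intro mult_left_mono) auto
    moreover have "4 * Cp * lam \<le> 4 * Cp * (2 * Cp)" using C0 lC by (intro mult_left_mono) auto
    ultimately have "lam * lam + 2 * Cp * lam + 4 * Cp * lam \<le> 16 * Cp\<^sup>2"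
      by (simp add: power2_eq_square algebra_simps)
    then show ?thesis using X0 by (intro mult_right_mono) auto
  qed
  finally have A: "a\<^sup>2 * G \<le> 32 * Cp\<^sup>2 * X" by (simp add: power2_eq_square algebra_simps)
  have B: "2 * Cp\<^sup>2 \<le> (Cp + 1) ^ 4"
  proof -
    have "(2 * Cp + 1)\<^sup>2 \<le> ((Cp + 1)\<^sup>2)\<^sup>2"
      using C0 by (intro power_mono) (auto simp: power2_eq_square algebra_simps)
    moreover have "2 * Cp\<^sup>2 \<le> (2 * Cp + 1)\<^sup>2" using C0 by (simp add: power2_eq_square algebra_simps)
    ultimately show ?thesis by (simp add: power_mult[symmetric])
  qed
  have P: "0 < 16 * (Cp + 1) ^ 4" using C0 by simp
  have "a\<^sup>2 / (16 * (Cp + 1) ^ 4) * G = a\<^sup>2 * G / (16 * (Cp + 1) ^ 4)" by simp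
  also have "\<dots> \<le> 32 * Cp\<^sup>2 * X / (16 * (Cp + 1) ^ 4)" by (rule divide_right_mono[OF A]) (use P in simp)
  also have "\<dots> \<le> X"
  proof -
    have "32 * Cp\<^sup>2 * X \<le> 16 * (Cp + 1) ^ 4 * X" using B X0 by (intro mult_right_mono) auto
    then show ?thesis using P by (simp add: divide_le_eq)
  qed
  finally show ?thesis unfolding a_def .
qed

context WG
begin

lemma opn_bdd: "bdd_above {l2_norm m ((\<lambda>f x. laplacian b m f x + f x) f) | f. in_l2 m f \<and> l2_norm m f \<le> 1}"
proof (rule bdd_aboveI[of _ "sqrt K"])
  fix z assume "z \<in> {l2_norm m ((\<lambda>f x. laplacian b m f x + f x) f) | f. in_l2 m f \<and> l2_norm m f \<le> 1}"
  then obtain f where f: "in_l2 m f" "l2_norm m f \<le> 1" and z: "z = l2_norm m (\<lambda>x. laplacian b m f x + f x)" by auto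
  have nn: "0 \<le> (\<Sum>\<^sub>\<infinity>x. m x * (f x)\<^sup>2)" by (rule infsum_nonneg) (use mpos in \<open>simp add: less_imp_le\<close>)
  have "sqrt (\<Sum>\<^sub>\<infinity>x. m x * (f x)\<^sup>2) \<le> 1" using f(2) unfolding l2_norm_def l2_sq .
  then have f1: "(\<Sum>\<^sub>\<infinity>x. m x * (f x)\<^sup>2) \<le> 1" using nn by simp
  have K0: "0 \<le> K" unfolding K_def by simp
  have "(\<Sum>\<^sub>\<infinity>x. m x * (laplacian b m f x + f x)\<^sup>2) \<le> K * (\<Sum>\<^sub>\<infinity>x. m x * (f x)\<^sup>2)"
    by (rule op_bound(2)[OF f(1)])
  also have "\<dots> \<le> K" using f1 K0 by (simp add: mult_left_le)
  finally show "z \<le> sqrt K" unfolding z l2_norm_def l2_sq by simp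
qed

lemma opn_ge: "deg y / m y + 1 \<le> op_norm m (\<lambda>f x. laplacian b m f x + f x)"
proof -
  define d where "d = (\<lambda>z. if z = y then 1 / sqrt (m y) else 0)"
  have my: "0 < m y" by (rule mpos)
  have dsum: "(\<lambda>x. m x * (d x)\<^sup>2) summable_on UNIV" by (rule infsum_single(2)[of y]) (simp add: d_def)
  then have dl2: "in_l2 m d" unfolding in_l2_def .
  have "l2_inner m d d = m y * (d y)\<^sup>2" unfolding l2_sq by (rule infsum_single(1)[of y]) (simp add: d_def)
  also have "\<dots> = 1" using my by (simp add: d_def power_divide)
  finally have dn: "l2_norm m d = 1" unfolding l2_norm_def by simp
  define F where "F = (\<lambda>x. laplacian b m d x + d x)"
  have Fl2: "in_l2 m F" unfolding F_def by (rule op_bound(1)[OF dl2])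
  have bd: "(\<Sum>\<^sub>\<infinity>z. b y z * d z) = b y y * d y" by (rule infsum_single(1)[of y]) (simp add: d_def)
  have Fy: "F y = (deg y / m y + 1) * d y"
    unfolding F_def lap_eq[OF dl2] bd using b0[of y] my by (simp add: field_simps)
  have "m y * (F y)\<^sup>2 \<le> (\<Sum>\<^sub>\<infinity>x. m x * (F x)\<^sup>2)"
  proof -
    have "sum (\<lambda>x. m x * (F x)\<^sup>2) {y} \<le> (\<Sum>\<^sub>\<infinity>x. m x * (F x)\<^sup>2)"
      by (rule finite_sum_le_infsum) (use Fl2 mpos in \<open>auto simp: in_l2_def less_imp_le\<close>)
    then show ?thesis by simp
  qed
  moreover have "m y * (F y)\<^sup>2 = (deg y / m y + 1)\<^sup>2"
    unfolding Fy d_def using my by (simp add: power_mult_distrib power_divide)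
  ultimately have "(deg y / m y + 1)\<^sup>2 \<le> l2_inner m F F" unfolding l2_sq by simp
  then have "sqrt ((deg y / m y + 1)\<^sup>2) \<le> l2_norm m F" unfolding l2_norm_def by (rule real_sqrt_le_mono)
  moreover have "0 \<le> deg y / m y + 1" using deg_nn[of y] my by simp
  ultimately have A: "deg y / m y + 1 \<le> l2_norm m F" by simp
  have "l2_norm m F \<in> {l2_norm m ((\<lambda>f x. laplacian b m f x + f x) f) | f. in_l2 m f \<and> l2_norm m f \<le> 1}"
    using dl2 dn unfolding F_def by auto
  then have "l2_norm m F \<le> op_norm m (\<lambda>f x. laplacian b m f x + f x)"
    unfolding op_norm_def by (rule cSup_upper[OF _ opn_bdd])
  then show ?thesis using A by simp
qed

end

theorem corollary5p2:
  fixes b :: "'a::countable \<Rightarrow> 'a \<Rightarrow> real" and m :: "'a \<Rightarrow> real"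
    and D :: "'a set" and I :: "real set" and maxI :: real
    and E :: "real set \<Rightarrow> ('a \<Rightarrow> real) \<Rightarrow> ('a \<Rightarrow> real)"
  assumes "weighted_graph b m"
    and "graph_connected b"
    and "condB b m"
    and "condM m"
    and "relatively_dense b D"
    and "UNIV - D \<noteq> {}"
    and "I \<in> sets borel"
    and "maxI \<in> I" and "\<forall>y\<in>I. y \<le> maxI"
    and "maxI < 1 / (inradius b (UNIV - D) * vol_sup b m (inradius b (UNIV - D)))"
    and "spectral_resolution m (laplacian b m) E"
  shows "\<forall>f. in_l2 m f \<longrightarrow>
           l2_inner m (E I (\<lambda>x. indicator D x * E I f x)) f
           \<ge> (1 / (inradius b (UNIV - D) * vol_sup b m (inradius b (UNIV - D))) - maxI)\<^sup>2
               / (16 * (op_norm m (\<lambda>f x. laplacian b m f x + f x)) ^ 4)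
             * l2_inner m (E I f) f"
proof -
  note wg = assms(1)[unfolded weighted_graph_def]
  have mpos: "\<And>x. 0 < m x" using wg by blast
  obtain C where C: "\<forall>x. (\<Sum>\<^sub>\<infinity>y. b x y) / m x \<le> C" using assms(3) unfolding condB_def by blast
  have degC: "(\<Sum>\<^sub>\<infinity>y. b x y) \<le> C * m x" for x using C mpos[of x] by (simp add: divide_le_eq)
  interpret WG b m C
    by unfold_locales (use wg degC in \<open>auto simp: fun_eq_iff\<close>)
  obtain Mm where Mm: "\<And>x. m x \<le> Mm" using assms(4) unfolding condM_def by blast
  obtain R0 where R0: "R0 > 0" "(\<Union>p\<in>D. closed_ball b R0 p) = UNIV"
    using assms(5) unfolding relatively_dense_def by blast
  interpret WGG b m C D Mm R0
    by unfold_locales (use assms(2,6) Mm R0 in auto)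
  define N where "N = op_norm m (\<lambda>f x. laplacian b m f x + f x)"
  define Cp where "Cp = N - 1"
  have degCp: "deg x \<le> Cp * m x" for x
  proof -
    have "deg x / m x \<le> Cp" using opn_ge[of x] unfolding Cp_def N_def by simp
    then show ?thesis using mpos[of x] by (simp add: divide_le_eq)
  qed
  have Cp0: "0 \<le> Cp" using opn_ge[of undefined] deg_nn[of undefined] mpos[of undefined] unfolding Cp_def N_def
    by (smt (verit) divide_nonneg_pos)
  have NCp: "N = Cp + 1" unfolding Cp_def by simp
  define lam where "lam = 1 / (Rin * V)"
  have lam_eq: "1 / (inradius b (UNIV - D) * vol_sup b m (inradius b (UNIV - D))) = lam"
    unfolding lam_def Rin_def V_def ..
  have sr: "spectral_resolution m (laplacian b m) E" by (rule assms(11))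
  have I: "I \<in> sets borel" by (rule assms(7))
  show ?thesis unfolding lam_eq N_def[symmetric]
  proof (intro allI impI)
    fix f assume f: "in_l2 m f"
    define g where "g = E I f"
    have g: "in_l2 m g" unfolding g_def by (rule sr_l2[OF sr I f])
    define h where "h = (\<lambda>x. indicator D x * g x)"
    define k where "k = (\<lambda>x. indicator (UNIV - D) x * g x)"
    have dom: "in_l2 m (\<lambda>x. indicator A x * g x)" for A
      unfolding in_l2_def
    proof (rule sum_dom)
      show "(\<lambda>x. m x * (g x)\<^sup>2) summable_on UNIV" using g unfolding in_l2_def .
      fix x show "\<bar>m x * (indicator A x * g x)\<^sup>2\<bar> \<le> m x * (g x)\<^sup>2"
        using mpos[of x] by (auto simp: indicator_def)
    qed
    have h: "in_l2 m h" unfolding h_def by (rule dom)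
    have k: "in_l2 m k" unfolding k_def by (rule dom)
    have kgh: "k x = g x - h x" for x unfolding k_def h_def by (auto simp: indicator_def)
    define G where "G = (\<Sum>\<^sub>\<infinity>x. m x * (g x)\<^sup>2)"
    define X where "X = (\<Sum>\<^sub>\<infinity>x. m x * (h x)\<^sup>2)"
    define Kk where "Kk = (\<Sum>\<^sub>\<infinity>x. m x * (k x)\<^sup>2)"
    have X0: "0 \<le> X" unfolding X_def by (rule infsum_nonneg) (use mpos in \<open>simp add: less_imp_le\<close>)
    have K0: "0 \<le> Kk" unfolding Kk_def by (rule infsum_nonneg) (use mpos in \<open>simp add: less_imp_le\<close>)
    have GXK: "G = X + Kk"
    proof -
      have "G = (\<Sum>\<^sub>\<infinity>x. m x * (h x)\<^sup>2 + m x * (k x)\<^sup>2)"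
        unfolding G_def by (rule infsum_cong) (auto simp: h_def k_def indicator_def)
      also have "\<dots> = X + Kk" unfolding X_def Kk_def
        by (rule infsum_add) (use h k in \<open>auto simp: in_l2_def\<close>)
      finally show ?thesis .
    qed
    have LHS: "l2_inner m (E I (\<lambda>x. indicator D x * E I f x)) f = X"
    proof -
      have "l2_inner m (E I h) f = l2_inner m h (E I f)" by (rule sr_sa[OF sr I h f])
      also have "\<dots> = X" unfolding l2_inner_def X_def g_def[symmetric]
        by (rule infsum_cong) (auto simp: h_def indicator_def power2_eq_square)
      finally show ?thesis unfolding h_def g_def .
    qed
    have RHS: "l2_inner m (E I f) f = G"
    proof -
      have "E I f = E I (E I f)" using sr_mult[OF sr I I f] by simp
      then have "l2_inner m (E I f) f = l2_inner m (E I (E I f)) f" by simp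
      also have "\<dots> = l2_inner m (E I f) (E I f)" by (rule sr_sa[OF sr I sr_l2[OF sr I f] f])
      finally show ?thesis unfolding G_def l2_sq g_def .
    qed
    have spec: "Q g \<le> maxI * G"
      using sr_spec_bound[OF sr mpos f I assms(9)] green[OF g] unfolding g_def[symmetric] G_def l2_sq by simp
    have main: "(lam - maxI)\<^sup>2 / (16 * N ^ 4) * G \<le> X"
    proof (cases "G = 0")
      case True then show ?thesis using X0 by simp
    next
      case False
      have G0: "0 < G" using False GXK X0 K0 by simp
      have M0: "0 \<le> maxI"
      proof -
        have "0 \<le> maxI * G" using spec Q_nn[of g] by simp
        then show ?thesis using G0 by (simp add: zero_le_mult_iff)
      qed
      have Mlt: "maxI < lam" using assms(10) unfolding lam_eq .
      have lpos: "0 < lam" using M0 Mlt by simp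
      have RV: "0 < Rin * V" using lpos unfolding lam_def by (simp add: zero_less_divide_iff)
      have hk: "Kk \<le> Rin * V * Q k"
        unfolding Kk_def by (rule hardy[OF k]) (auto simp: k_def)
      have hk': "lam * Kk \<le> Q k"
      proof -
        have "lam * Kk \<le> lam * (Rin * V * Q k)" using hk lpos by (intro mult_left_mono) auto
        also have "\<dots> = (lam * (Rin * V)) * Q k" by (simp add: mult.assoc)
        also have "lam * (Rin * V) = 1" unfolding lam_def using RV by (metis less_irrefl nonzero_divide_eq_eq times_divide_eq_left mult_1)
        finally have "lam * Kk \<le> 1 * Q k" .
        then show ?thesis by simp
      qed
      have lC: "lam \<le> 2 * Cp"
      proof -
        obtain x0 where x0: "x0 \<notin> D" using assms(6) by blast
        define dd where "dd = (\<lambda>z. if z = x0 then 1 else 0 :: real)"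
        have ds: "(\<lambda>x. m x * (dd x)\<^sup>2) summable_on UNIV" by (rule infsum_single(2)[of x0]) (simp add: dd_def)
        then have dl2: "in_l2 m dd" unfolding in_l2_def .
        have dsum: "(\<Sum>\<^sub>\<infinity>x. m x * (dd x)\<^sup>2) = m x0" using infsum_single(1)[of x0 "\<lambda>x. m x * (dd x)\<^sup>2"]
          by (simp add: dd_def)
        have dD: "\<forall>y\<in>D. dd y = 0" using x0 by (auto simp: dd_def)
        have "m x0 \<le> Rin * V * Q dd" using hardy[OF dl2 dD] dsum by simp
        also have "\<dots> \<le> Rin * V * (2 * Cp * m x0)"
          using Q_bound[OF dl2 degCp] dsum RV by (intro mult_left_mono) auto
        finally have "m x0 * 1 \<le> m x0 * (Rin * V * (2 * Cp))" by (simp add: algebra_simps)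
        then have "1 \<le> Rin * V * (2 * Cp)" using mpos[of x0] by (simp add: mult_le_cancel_left)
        then show ?thesis unfolding lam_def using RV by (simp add: divide_le_eq mult.commute)
      qed
      define t where "t = (lam - maxI) / (2 * lam)"
      have t0: "0 < t" unfolding t_def using Mlt lpos by simp
      have split: "Q k \<le> (1 + t) * Q g + (1 + 1 / t) * Q h"
        by (rule Q_split[OF g h k kgh t0])
      have Qh: "Q h \<le> 2 * Cp * X" unfolding X_def by (rule Q_bound[OF h degCp])
      have "lam * (G - X) \<le> (1 + t) * maxI * G + (1 + 1 / t) * (2 * Cp * X)"
      proof -
        have "lam * (G - X) = lam * Kk" using GXK by simp
        also have "\<dots> \<le> (1 + t) * Q g + (1 + 1 / t) * Q h" using hk' split by linarith
        also have "\<dots> \<le> (1 + t) * (maxI * G) + (1 + 1 / t) * (2 * Cp * X)"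
          using spec Qh t0 by (intro add_mono mult_left_mono) auto
        finally show ?thesis by (simp add: mult.assoc)
      qed
      then have "(lam - maxI)\<^sup>2 / (16 * (Cp + 1) ^ 4) * G \<le> X"
        by (intro final_arith[OF M0 Mlt lC X0 _ less_imp_le[OF G0]]) (simp add: t_def)
      then show ?thesis unfolding NCp .
    qed
    show "(lam - maxI)\<^sup>2 / (16 * N ^ 4) * l2_inner m (E I f) f
          \<le> l2_inner m (E I (\<lambda>x. indicator D x * E I f x)) f"
      using main LHS RHS by simp
  qed
qed


end
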